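(* For every $\lambda$ and every integer $k\ge1$, $$\Big\{\operatorname{tr}\big((\lambda-L)^k\big),\ \mathcal{E}(\lambda)-\mathcal{G}(\lambda)\Big\}_0=0,$$ where $\mathcal{G}(\lambda)=\operatorname{tr}(X(\lambda-L)^\vee)$ and $\mathcal{E}(\lambda)=\mathbf{x}^T(\lambda-L)^\vee\mathbf{e}$. Consequently $\{I_k,\mathcal{E}(\lambda)-\mathcal{G}(\lambda)\}_0=0$ for all $k\ge1$.
   Context: Fix $n\ge1$. On the open subset of $\mathbb{R}^{2n}$ with coordinates $(x_1,\dots,x_n,p_1,\dots,p_n)$ where the $x_i$ are pairwise distinct, let $L$ be the $n\times n$ matrix with $L_{ij}=p_i\delta_{ij}+(1-\delta_{ij})/(x_i-x_j)$ and $X=\mathrm{diag}(x_1,\dots,x_n)$. $A^\vee$ denotes the adjugate of a square matrix $A$. $\mathbf{e}=(1,\dots,1)^T$, $\mathbf{x}=(x_1,\dots,x_n)^T$, $I_k=\frac1k\operatorname{tr}L^k$. $\{\cdot,\cdot\}_0$ is the canonical bracket with $\{p_i,x_j\}_0=\delta_{ij}$, $\{x_i,x_j\}_0=\{p_i,p_j\}_0=0$. *)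

theory Defs
  imports "HOL-Analysis.Derivative" "Jordan_Normal_Form.Determinant"
begin

(* Phase-space points are pairs (x, p) of functions nat => real; only the
   coordinates 0..n-1 are relevant. *)

definition mtrace :: "real mat \<Rightarrow> real" where
  "mtrace A = (\<Sum>i<dim_row A. A $$ (i, i))"

definition Lmat :: "nat \<Rightarrow> (nat \<Rightarrow> real) \<Rightarrow> (nat \<Rightarrow> real) \<Rightarrow> real mat" where
  "Lmat n x p = mat n n (\<lambda>(i, j). if i = j then p i else 1 / (x i - x j))"

definition Xmat :: "nat \<Rightarrow> (nat \<Rightarrow> real) \<Rightarrow> real mat" where
  "Xmat n x = mat n n (\<lambda>(i, j). if i = j then x i else 0)"

definition shiftL :: "nat \<Rightarrow> real \<Rightarrow> (nat \<Rightarrow> real) \<Rightarrow> (nat \<Rightarrow> real) \<Rightarrow> real mat" where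
  "shiftL n lam x p = lam \<cdot>\<^sub>m 1\<^sub>m n - Lmat n x p"

definition calG :: "nat \<Rightarrow> real \<Rightarrow> (nat \<Rightarrow> real) \<Rightarrow> (nat \<Rightarrow> real) \<Rightarrow> real" where
  "calG n lam x p = mtrace (Xmat n x * adj_mat (shiftL n lam x p))"

definition calE :: "nat \<Rightarrow> real \<Rightarrow> (nat \<Rightarrow> real) \<Rightarrow> (nat \<Rightarrow> real) \<Rightarrow> real" where
  "calE n lam x p = vec n x \<bullet> (adj_mat (shiftL n lam x p) *\<^sub>v vec n (\<lambda>_. 1))"

definition Ik :: "nat \<Rightarrow> nat \<Rightarrow> (nat \<Rightarrow> real) \<Rightarrow> (nat \<Rightarrow> real) \<Rightarrow> real" where
  "Ik n k x p = (1 / real k) * mtrace (Lmat n x p ^\<^sub>m k)"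

definition pdx :: "((nat \<Rightarrow> real) \<Rightarrow> (nat \<Rightarrow> real) \<Rightarrow> real) \<Rightarrow> (nat \<Rightarrow> real) \<Rightarrow> (nat \<Rightarrow> real) \<Rightarrow> nat \<Rightarrow> real" where
  "pdx f x p i = deriv (\<lambda>t. f (x(i := t)) p) (x i)"

definition pdp :: "((nat \<Rightarrow> real) \<Rightarrow> (nat \<Rightarrow> real) \<Rightarrow> real) \<Rightarrow> (nat \<Rightarrow> real) \<Rightarrow> (nat \<Rightarrow> real) \<Rightarrow> nat \<Rightarrow> real" where
  "pdp f x p i = deriv (\<lambda>t. f x (p(i := t))) (p i)"

(* canonical bracket with {p_i, x_j}_0 = delta_ij *)
definition pbracket :: "nat \<Rightarrow> ((nat \<Rightarrow> real) \<Rightarrow> (nat \<Rightarrow> real) \<Rightarrow> real) \<Rightarrow> ((nat \<Rightarrow> real) \<Rightarrow> (nat \<Rightarrow> real) \<Rightarrow> real) \<Rightarrow> (nat \<Rightarrow> real) \<Rightarrow> (nat \<Rightarrow> real) \<Rightarrow> real" where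
  "pbracket n f g x p = (\<Sum>i<n. pdp f x p i * pdx g x p i - pdx f x p i * pdp g x p i)"

end

theory Submission
  imports Defs "Jordan_Normal_Form.Char_Poly"
begin


lemma mult_entry:
  assumes "A \<in> carrier_mat n n" "B \<in> carrier_mat n n" "i < n" "j < n"
  shows "(A * B) $$ (i,j) = (\<Sum>l<n. A $$ (i,l) * B $$ (l,j))"
  using assms by (auto simp: scalar_prod_def atLeast0LessThan intro: sum.cong)

lemma index_minus_carrier:
  "A \<in> carrier_mat n n \<Longrightarrow> B \<in> carrier_mat n n \<Longrightarrow> i < n \<Longrightarrow> j < n \<Longrightarrow>
   (A - B) $$ (i,j) = A $$ (i,j) - B $$ (i,j)"
  by (metis carrier_matD(1,2) index_minus_mat(1))

lemma index_add_carrier: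
  "A \<in> carrier_mat n n \<Longrightarrow> B \<in> carrier_mat n n \<Longrightarrow> i < n \<Longrightarrow> j < n \<Longrightarrow>
   (A + B) $$ (i,j) = A $$ (i,j) + B $$ (i,j)"
  by (metis carrier_matD(1,2) index_add_mat(1))

lemma index_smult_carrier:
  "A \<in> carrier_mat n n \<Longrightarrow> i < n \<Longrightarrow> j < n \<Longrightarrow> (c \<cdot>\<^sub>m A) $$ (i,j) = c * A $$ (i,j)"
  by (metis carrier_matD(1,2) index_smult_mat(1))

lemma mtrace_alt: "A \<in> carrier_mat n n \<Longrightarrow> mtrace A = (\<Sum>i<n. A $$ (i,i))"
  by (simp add: mtrace_def)

lemma mtrace_comm:
  assumes A: "A \<in> carrier_mat n n" and B: "B \<in> carrier_mat n n"
  shows "mtrace (A * B) = mtrace (B * A)"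
proof -
  have AB: "A * B \<in> carrier_mat n n" "B * A \<in> carrier_mat n n" using A B by auto
  have "mtrace (A * B) = (\<Sum>i<n. \<Sum>l<n. A $$ (i,l) * B $$ (l,i))"
    unfolding mtrace_alt[OF AB(1)] by (intro sum.cong refl mult_entry[OF A B]) auto
  also have "\<dots> = (\<Sum>l<n. \<Sum>i<n. B $$ (l,i) * A $$ (i,l))"
    by (subst sum.swap) (simp add: mult.commute)
  also have "\<dots> = mtrace (B * A)"
    unfolding mtrace_alt[OF AB(2)] by (intro sum.cong refl mult_entry[OF B A, symmetric]) auto
  finally show ?thesis .
qed

lemma mtrace_add: "A \<in> carrier_mat n n \<Longrightarrow> B \<in> carrier_mat n n \<Longrightarrow> mtrace (A + B) = mtrace A + mtrace B"
  by (auto simp: mtrace_def sum.distrib[symmetric] intro!: sum.cong)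

lemma mtrace_minus: "A \<in> carrier_mat n n \<Longrightarrow> B \<in> carrier_mat n n \<Longrightarrow> mtrace (A - B) = mtrace A - mtrace B"
  by (auto simp: mtrace_def sum_subtractf[symmetric] intro!: sum.cong)

lemma mtrace_smult: "A \<in> carrier_mat n n \<Longrightarrow> mtrace (c \<cdot>\<^sub>m A) = c * mtrace A"
  by (auto simp: mtrace_def sum_distrib_left intro!: sum.cong)

lemma pow_commute:
  assumes "Y \<in> carrier_mat n n" "W \<in> carrier_mat n n" "W * Y = Y * W"
  shows "W * Y ^\<^sub>m k = Y ^\<^sub>m k * W"
proof (induction k)
  case 0 then show ?case using assms by simp
next
  case (Suc k)
  have "W * Y ^\<^sub>m Suc k = (W * Y ^\<^sub>m k) * Y"
    using assms by (simp add: assoc_mult_mat[symmetric, of W n n _ n _ n])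
  also have "\<dots> = Y ^\<^sub>m k * (W * Y)" using assms Suc by (simp add: assoc_mult_mat[of _ n n _ n _ n])
  also have "\<dots> = Y ^\<^sub>m k * (Y * W)" using assms by simp
  also have "\<dots> = Y ^\<^sub>m Suc k * W" using assms by (simp add: assoc_mult_mat[of _ n n _ n _ n])
  finally show ?case .
qed

definition mderiv :: "nat \<Rightarrow> (real \<Rightarrow> real mat) \<Rightarrow> real mat \<Rightarrow> real \<Rightarrow> bool" where
  "mderiv n Y Y' t0 \<longleftrightarrow> (\<forall>t. Y t \<in> carrier_mat n n) \<and> Y' \<in> carrier_mat n n \<and>
     (\<forall>i<n. \<forall>j<n. ((\<lambda>t. Y t $$ (i,j)) has_real_derivative Y' $$ (i,j)) (at t0))"

lemma mderiv_mult:
  assumes Y: "mderiv n Y Y' t0" and W: "mderiv n W W' t0"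
  shows "mderiv n (\<lambda>t. Y t * W t) (Y' * W t0 + Y t0 * W') t0"
proof -
  have c: "\<And>t. Y t \<in> carrier_mat n n" "\<And>t. W t \<in> carrier_mat n n" "Y' \<in> carrier_mat n n" "W' \<in> carrier_mat n n"
    using Y W by (auto simp: mderiv_def)
  have d: "\<And>i j. i < n \<Longrightarrow> j < n \<Longrightarrow> ((\<lambda>t. Y t $$ (i,j)) has_real_derivative Y' $$ (i,j)) (at t0)"
          "\<And>i j. i < n \<Longrightarrow> j < n \<Longrightarrow> ((\<lambda>t. W t $$ (i,j)) has_real_derivative W' $$ (i,j)) (at t0)"
    using Y W by (auto simp: mderiv_def)
  show ?thesis unfolding mderiv_def
  proof (intro conjI allI impI)
    fix i j assume ij: "i < n" "j < n"
    have "((\<lambda>t. \<Sum>l<n. Y t $$ (i,l) * W t $$ (l,j)) has_real_derivative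
          (\<Sum>l<n. Y' $$ (i,l) * W t0 $$ (l,j) + Y t0 $$ (i,l) * W' $$ (l,j))) (at t0)"
      by (rule DERIV_sum, rule derivative_eq_intros , rule d(1), use ij in auto, rule d(2), use ij in auto)
    moreover have "(\<lambda>t. (Y t * W t) $$ (i,j)) = (\<lambda>t. \<Sum>l<n. Y t $$ (i,l) * W t $$ (l,j))"
      using c ij by (intro ext) (simp del: index_mult_mat(1) add: mult_entry[OF c(1) c(2) ij])
    moreover have "(Y' * W t0 + Y t0 * W') $$ (i,j) = (\<Sum>l<n. Y' $$ (i,l) * W t0 $$ (l,j) + Y t0 $$ (i,l) * W' $$ (l,j))"
      using c(1)[of t0] c(2)[of t0] c(3) c(4) ij
      by (subst index_add_mat(1)) (simp_all add: carrier_matD del: index_mult_mat(1) add: mult_entry[OF c(3) c(2) ij] mult_entry[OF c(1) c(4) ij] sum.distrib)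
    ultimately show "((\<lambda>t. (Y t * W t) $$ (i,j)) has_real_derivative (Y' * W t0 + Y t0 * W') $$ (i,j)) (at t0)"
      by simp
  qed (use c in \<open>auto intro!: mult_carrier_mat add_carrier_mat\<close>)
qed

fun powD :: "nat \<Rightarrow> real mat \<Rightarrow> real mat \<Rightarrow> nat \<Rightarrow> real mat" where
  "powD n Y Y' 0 = 0\<^sub>m n n"
| "powD n Y Y' (Suc k) = powD n Y Y' k * Y + Y ^\<^sub>m k * Y'"

lemma powD_carrier: "Y \<in> carrier_mat n n \<Longrightarrow> Y' \<in> carrier_mat n n \<Longrightarrow> powD n Y Y' k \<in> carrier_mat n n"
  by (induction k) auto

lemma mderiv_const: "A \<in> carrier_mat n n \<Longrightarrow> mderiv n (\<lambda>t. A) (0\<^sub>m n n) t0"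
  by (auto simp: mderiv_def)

lemma mderiv_pow:
  assumes Y: "mderiv n Y Y' t0"
  shows "mderiv n (\<lambda>t. Y t ^\<^sub>m k) (powD n (Y t0) Y' k) t0"
proof (induction k)
  case 0
  have "\<And>t. dim_row (Y t) = n" using Y by (auto simp: mderiv_def)
  then have "(\<lambda>t. Y t ^\<^sub>m 0) = (\<lambda>t. 1\<^sub>m n)" by simp
  then show ?case using mderiv_const[of "1\<^sub>m n" n t0] by simp
next
  case (Suc k)
  from mderiv_mult[OF Suc Y] show ?case by simp
qed

lemma mtrace_powD:
  assumes Y: "Y \<in> carrier_mat n n" and Y': "Y' \<in> carrier_mat n n"
  shows "W \<in> carrier_mat n n \<Longrightarrow> W * Y = Y * W \<Longrightarrow>
    mtrace (powD n Y Y' k * W) = real k * mtrace (Y ^\<^sub>m (k - 1) * Y' * W)"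
proof (induction k arbitrary: W)
  case 0 then show ?case by (simp add: mtrace_def)
next
  case (Suc k)
  have P: "powD n Y Y' k \<in> carrier_mat n n" using powD_carrier[OF Y Y'] .
  have YW: "Y * W \<in> carrier_mat n n" "(Y * W) * Y = Y * (Y * W)"
    using Suc.prems Y by (auto simp: assoc_mult_mat[of _ n n _ n _ n])
  have "powD n Y Y' (Suc k) * W = (powD n Y Y' k * Y + Y ^\<^sub>m k * Y') * W" by simp
  also have "\<dots> = powD n Y Y' k * Y * W + Y ^\<^sub>m k * Y' * W"
    by (rule add_mult_distrib_mat) (use P Y Y' Suc.prems in auto)
  finally have "powD n Y Y' (Suc k) * W = powD n Y Y' k * Y * W + Y ^\<^sub>m k * Y' * W" .
  also have "powD n Y Y' k * Y * W = powD n Y Y' k * (Y * W)"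
    by (rule assoc_mult_mat[OF P Y Suc.prems(1)])
  finally have "powD n Y Y' (Suc k) * W = powD n Y Y' k * (Y * W) + Y ^\<^sub>m k * Y' * W" .
  moreover have "powD n Y Y' k * (Y * W) \<in> carrier_mat n n" "Y ^\<^sub>m k * Y' * W \<in> carrier_mat n n"
    using P Y Y' Suc.prems by auto
  ultimately have "mtrace (powD n Y Y' (Suc k) * W) = mtrace (powD n Y Y' k * (Y * W)) + mtrace (Y ^\<^sub>m k * Y' * W)"
    by (simp add: mtrace_add)
  also have "mtrace (powD n Y Y' k * (Y * W)) = real k * mtrace (Y ^\<^sub>m (k - 1) * Y' * (Y * W))"
    using Suc.IH[OF YW] .
  also have "real k * mtrace (Y ^\<^sub>m (k - 1) * Y' * (Y * W)) = real k * mtrace (Y ^\<^sub>m k * Y' * W)"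
  proof (cases k)
    case 0 then show ?thesis by simp
  next
    case (Suc k')
    have e1: "mtrace (Y ^\<^sub>m k' * Y' * (Y * W)) = mtrace (Y' * (Y * W * Y ^\<^sub>m k'))"
      using Y Y' Suc.prems
      by (simp add: mtrace_comm[of "Y ^\<^sub>m k'" n "Y' * (Y * W)"] assoc_mult_mat[of _ n n _ n _ n])
    have "Y * W * Y ^\<^sub>m k' = (W * Y) * Y ^\<^sub>m k'" using Y Suc.prems by simp
    also have "\<dots> = W * (Y * Y ^\<^sub>m k')" by (rule assoc_mult_mat) (use Y Suc.prems in auto)
    also have "Y * Y ^\<^sub>m k' = Y ^\<^sub>m k' * Y" using pow_commute[OF Y Y refl] .
    finally have e2: "Y * W * Y ^\<^sub>m k' = W * Y ^\<^sub>m k" using Suc by simp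
    have e3: "mtrace (Y ^\<^sub>m k * Y' * W) = mtrace (Y' * (W * Y ^\<^sub>m k))"
      using Y Y' Suc.prems
      by (simp add: mtrace_comm[of "Y ^\<^sub>m k" n "Y' * W"] assoc_mult_mat[of _ n n _ n _ n])
    show ?thesis using e1 e2 e3 Suc by simp
  qed
  finally show ?case by (simp add: algebra_simps)
qed

section \<open>Derivatives of determinants and adjugates\<close>

lemma permutes_lt:
  fixes p :: "nat \<Rightarrow> nat"
  assumes "p permutes {0..<n}" "i < n" shows "p i < n"
proof -
  have "i \<in> {0..<n}" using assms(2) by simp
  then have "p i \<in> {0..<n}" using permutes_in_image[OF assms(1)] by simp
  then show ?thesis by simp
qed

definition detD :: "nat \<Rightarrow> real mat \<Rightarrow> real mat \<Rightarrow> real" where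
  "detD n Y Z = (\<Sum>p\<in>{p. p permutes {0..<n}}. signof p *
      (\<Sum>l\<in>{0..<n}. Z $$ (l, p l) * (\<Prod>i\<in>{0..<n}-{l}. Y $$ (i, p i))))"

lemma det_deriv:
  assumes Y: "mderiv n Y Y' t0"
  shows "((\<lambda>t. det (Y t)) has_real_derivative detD n (Y t0) Y') (at t0)"
proof -
  have c: "\<And>t. Y t \<in> carrier_mat n n" using Y by (auto simp: mderiv_def)
  have d: "\<And>i j. i < n \<Longrightarrow> j < n \<Longrightarrow> ((\<lambda>t. Y t $$ (i,j)) has_real_derivative Y' $$ (i,j)) (at t0)"
    using Y by (auto simp: mderiv_def)
  have e: "(\<lambda>t. det (Y t)) = (\<lambda>t. \<Sum>p\<in>{p. p permutes {0..<n}}. signof p * (\<Prod>i\<in>{0..<n}. Y t $$ (i, p i)))"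
    by (intro ext) (rule det_def'[OF c])
  show ?thesis unfolding e detD_def
  proof (intro DERIV_sum DERIV_cmult)
    fix p assume "p \<in> {p. p permutes {0..<n}}"
    then have pp: "\<And>i. i < n \<Longrightarrow> p i < n" using permutes_lt by blast
    show "((\<lambda>t. \<Prod>i\<in>{0..<n}. Y t $$ (i, p i)) has_real_derivative
          (\<Sum>l\<in>{0..<n}. Y' $$ (l, p l) * (\<Prod>i\<in>{0..<n}-{l}. Y t0 $$ (i, p i)))) (at t0)"
      by (rule has_field_derivative_prod) (use d pp in auto)
  qed
qed

definition adjD :: "nat \<Rightarrow> real mat \<Rightarrow> real mat \<Rightarrow> real mat" where
  "adjD n Y Z = mat n n (\<lambda>(i,j). (-1)^(j+i) * detD (n-1) (mat_delete Y j i) (mat_delete Z j i))"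

lemma adjD_carrier[simp]: "adjD n Y Z \<in> carrier_mat n n" by (simp add: adjD_def)

lemma adjD_entry: "i < n \<Longrightarrow> j < n \<Longrightarrow>
  adjD n Y Z $$ (i,j) = (-1)^(j+i) * detD (n-1) (mat_delete Y j i) (mat_delete Z j i)"
  by (simp add: adjD_def)

lemma mat_delete_entry:
  assumes "A \<in> carrier_mat n n" "a < n - 1" "b < n - 1"
  shows "mat_delete A j i $$ (a,b) = A $$ (if a < j then a else Suc a, if b < i then b else Suc b)"
  using assms by (simp add: mat_delete_def)

lemma mderiv_delete:
  assumes Y: "mderiv n Y Y' t0"
  shows "mderiv (n-1) (\<lambda>t. mat_delete (Y t) j i) (mat_delete Y' j i) t0"
proof -
  have c: "\<And>t. Y t \<in> carrier_mat n n" "Y' \<in> carrier_mat n n" using Y by (auto simp: mderiv_def)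
  show ?thesis unfolding mderiv_def
  proof (intro conjI allI impI)
    fix a b assume ab: "a < n - 1" "b < n - 1"
    define a' where "a' = (if a < j then a else Suc a)"
    define b' where "b' = (if b < i then b else Suc b)"
    have lt: "a' < n" "b' < n" using ab by (auto simp: a'_def b'_def)
    have "(\<lambda>t. mat_delete (Y t) j i $$ (a,b)) = (\<lambda>t. Y t $$ (a', b'))"
      using ab by (intro ext) (simp add: mat_delete_entry[OF c(1)] a'_def b'_def)
    moreover have "mat_delete Y' j i $$ (a,b) = Y' $$ (a', b')"
      using c ab by (simp add: mat_delete_entry a'_def b'_def)
    ultimately show "((\<lambda>t. mat_delete (Y t) j i $$ (a,b)) has_real_derivative mat_delete Y' j i $$ (a,b)) (at t0)"
      using Y lt by (simp add: mderiv_def)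
  qed (use mat_delete_carrier[OF c(1)] mat_delete_carrier[OF c(2)] in auto)
qed

lemma adj_entry: "A \<in> carrier_mat n n \<Longrightarrow> i < n \<Longrightarrow> j < n \<Longrightarrow>
   adj_mat A $$ (i,j) = (-1)^(j+i) * det (mat_delete A j i)"
  by (simp add: adj_mat_def cofactor_def)

lemma mderiv_adj:
  assumes Y: "mderiv n Y Y' t0"
  shows "mderiv n (\<lambda>t. adj_mat (Y t)) (adjD n (Y t0) Y') t0"
  unfolding mderiv_def
proof (intro conjI allI impI)
  have c: "\<And>t. Y t \<in> carrier_mat n n" using Y by (auto simp: mderiv_def)
  show "\<And>t. adj_mat (Y t) \<in> carrier_mat n n" using adj_mat(1)[OF c] .
  show "adjD n (Y t0) Y' \<in> carrier_mat n n" by simp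
  fix i j assume ij: "i < n" "j < n"
  have "(\<lambda>t. adj_mat (Y t) $$ (i,j)) = (\<lambda>t. (-1)^(j+i) * det (mat_delete (Y t) j i))"
    using ij by (intro ext) (simp add: adj_entry[OF c])
  moreover have "adjD n (Y t0) Y' $$ (i,j) = (-1)^(j+i) * detD (n-1) (mat_delete (Y t0) j i) (mat_delete Y' j i)"
    using ij by (simp add: adjD_entry)
  moreover have "((\<lambda>t. (-1)^(j+i) * det (mat_delete (Y t) j i)) has_real_derivative
      (-1)^(j+i) * detD (n-1) (mat_delete (Y t0) j i) (mat_delete Y' j i)) (at t0)"
    by (intro DERIV_cmult det_deriv[OF mderiv_delete[OF Y]])
  ultimately show "((\<lambda>t. adj_mat (Y t) $$ (i,j)) has_real_derivative adjD n (Y t0) Y' $$ (i,j)) (at t0)"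
    by simp
qed


lemma detD_jacobi:
  assumes Y: "Y \<in> carrier_mat n n" and Z: "Z \<in> carrier_mat n n"
  shows "detD n Y Z = mtrace (adj_mat Y * Z)"
proof -
  define Yl where "Yl l = mat n n (\<lambda>(a,b). if a = l then Z $$ (a,b) else Y $$ (a,b))" for l
  have Ylc: "Yl l \<in> carrier_mat n n" for l by (simp add: Yl_def)
  have step1: "detD n Y Z = (\<Sum>l<n. det (Yl l))"
  proof -
    have "detD n Y Z = (\<Sum>p\<in>{p. p permutes {0..<n}}. \<Sum>l\<in>{0..<n}. signof p * (Z $$ (l, p l) * (\<Prod>i\<in>{0..<n}-{l}. Y $$ (i, p i))))"
      unfolding detD_def by (simp add: sum_distrib_left)
    also have "\<dots> = (\<Sum>l\<in>{0..<n}. \<Sum>p\<in>{p. p permutes {0..<n}}. signof p * (\<Prod>i\<in>{0..<n}. Yl l $$ (i, p i)))"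
    proof (subst sum.swap, intro sum.cong refl)
      fix l p assume l: "l \<in> {0..<n}" and p: "p \<in> {p. p permutes {0..<n}}"
      have pp: "\<And>i. i < n \<Longrightarrow> p i < n" using p permutes_lt by blast
      have "(\<Prod>i\<in>{0..<n}. Yl l $$ (i, p i)) = Yl l $$ (l, p l) * (\<Prod>i\<in>{0..<n}-{l}. Yl l $$ (i, p i))"
        using l by (simp add: prod.remove)
      also have "\<dots> = Z $$ (l, p l) * (\<Prod>i\<in>{0..<n}-{l}. Y $$ (i, p i))"
        using l pp by (auto simp: Yl_def intro!: prod.cong)
      finally show "signof p * (Z $$ (l, p l) * (\<Prod>i\<in>{0..<n}-{l}. Y $$ (i, p i))) =
          signof p * (\<Prod>i\<in>{0..<n}. Yl l $$ (i, p i))" by simp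
    qed
    also have "\<dots> = (\<Sum>l<n. det (Yl l))"
      by (simp add: det_def'[OF Ylc] atLeast0LessThan)
    finally show ?thesis .
  qed
  have step2: "det (Yl l) = (\<Sum>j<n. Z $$ (l,j) * cofactor Y l j)" if l: "l < n" for l
  proof -
    have "det (Yl l) = (\<Sum>j<n. Yl l $$ (l,j) * cofactor (Yl l) l j)"
      by (rule laplace_expansion_row[OF Ylc l])
    also have "\<dots> = (\<Sum>j<n. Z $$ (l,j) * cofactor Y l j)"
    proof (intro sum.cong refl)
      fix j assume j: "j \<in> {..<n}"
      have "mat_delete (Yl l) l j = mat_delete Y l j"
        using Y by (intro eq_matI) (auto simp: mat_delete_def Yl_def)
      then show "Yl l $$ (l,j) * cofactor (Yl l) l j = Z $$ (l,j) * cofactor Y l j"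
        using j l by (simp add: cofactor_def Yl_def)
    qed
    finally show ?thesis .
  qed
  have AZ: "adj_mat Y * Z \<in> carrier_mat n n" using adj_mat(1)[OF Y] Z by auto
  have "mtrace (adj_mat Y * Z) = (\<Sum>i<n. \<Sum>l<n. adj_mat Y $$ (i,l) * Z $$ (l,i))"
    unfolding mtrace_alt[OF AZ] by (intro sum.cong refl mult_entry[OF adj_mat(1)[OF Y] Z]) auto
  also have "\<dots> = (\<Sum>i<n. \<Sum>l<n. Z $$ (l,i) * cofactor Y l i)"
    using Y by (intro sum.cong refl) (simp add: adj_mat_def mult.commute)
  also have "\<dots> = (\<Sum>l<n. \<Sum>i<n. Z $$ (l,i) * cofactor Y l i)"
    by (rule sum.swap)
  also have "\<dots> = detD n Y Z" using step1 step2 by simp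
  finally show ?thesis by simp
qed


lemma detD_linear:
  assumes K: "finite K" and Z: "\<And>a b. a < n \<Longrightarrow> b < n \<Longrightarrow> Z $$ (a,b) = (\<Sum>m\<in>K. c m * Zs m $$ (a,b))"
  shows "detD n Y Z = (\<Sum>m\<in>K. c m * detD n Y (Zs m))"
proof -
  let ?P = "{p. p permutes {0..<n}}"
  let ?Q = "\<lambda>p l. (\<Prod>i\<in>{0..<n}-{l}. Y $$ (i, p i))"
  have "detD n Y Z = (\<Sum>p\<in>?P. \<Sum>l\<in>{0..<n}. \<Sum>m\<in>K. c m * (signof p * (Zs m $$ (l, p l) * ?Q p l)))"
    unfolding detD_def
  proof (intro sum.cong refl)
    fix p assume p: "p \<in> ?P"
    have pp: "\<And>i. i < n \<Longrightarrow> p i < n" using p permutes_lt by blast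
    have "signof p * (\<Sum>l\<in>{0..<n}. Z $$ (l, p l) * ?Q p l) =
          (\<Sum>l\<in>{0..<n}. signof p * (Z $$ (l, p l) * ?Q p l))" by (simp add: sum_distrib_left)
    also have "\<dots> = (\<Sum>l\<in>{0..<n}. \<Sum>m\<in>K. c m * (signof p * (Zs m $$ (l, p l) * ?Q p l)))"
    proof (intro sum.cong refl)
      fix l assume "l \<in> {0..<n}"
      then have "Z $$ (l, p l) = (\<Sum>m\<in>K. c m * Zs m $$ (l, p l))" using Z pp by auto
      then show "signof p * (Z $$ (l, p l) * ?Q p l) = (\<Sum>m\<in>K. c m * (signof p * (Zs m $$ (l, p l) * ?Q p l)))"
        by (simp add: sum_distrib_left sum_distrib_right mult_ac)
    qed
    finally show "signof p * (\<Sum>l\<in>{0..<n}. Z $$ (l, p l) * ?Q p l) =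
          (\<Sum>l\<in>{0..<n}. \<Sum>m\<in>K. c m * (signof p * (Zs m $$ (l, p l) * ?Q p l)))" .
  qed
  also have "\<dots> = (\<Sum>p\<in>?P. \<Sum>m\<in>K. \<Sum>l\<in>{0..<n}. c m * (signof p * (Zs m $$ (l, p l) * ?Q p l)))"
    by (intro sum.cong refl) (rule sum.swap)
  also have "\<dots> = (\<Sum>m\<in>K. \<Sum>p\<in>?P. \<Sum>l\<in>{0..<n}. c m * (signof p * (Zs m $$ (l, p l) * ?Q p l)))"
    by (rule sum.swap)
  also have "\<dots> = (\<Sum>m\<in>K. c m * detD n Y (Zs m))"
    unfolding detD_def by (simp add: sum_distrib_left)
  finally show ?thesis .
qed

lemma adjD_linear:
  assumes K: "finite K" and Z: "\<And>a b. a < n \<Longrightarrow> b < n \<Longrightarrow> Z $$ (a,b) = (\<Sum>m\<in>K. c m * Zs m $$ (a,b))"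
    and Zc: "Z \<in> carrier_mat n n" and Zsc: "\<And>m. Zs m \<in> carrier_mat n n" and ij: "i < n" "j < n"
  shows "adjD n Y Z $$ (i,j) = (\<Sum>m\<in>K. c m * adjD n Y (Zs m) $$ (i,j))"
proof -
  have "detD (n-1) (mat_delete Y j i) (mat_delete Z j i) =
        (\<Sum>m\<in>K. c m * detD (n-1) (mat_delete Y j i) (mat_delete (Zs m) j i))"
  proof (rule detD_linear[OF K])
    fix a b assume ab: "a < n - 1" "b < n - 1"
    then show "mat_delete Z j i $$ (a,b) = (\<Sum>m\<in>K. c m * mat_delete (Zs m) j i $$ (a,b))"
      by (simp add: mat_delete_entry[OF Zc] mat_delete_entry[OF Zsc] Z)
  qed
  then show ?thesis using ij by (simp add: adjD_entry sum_distrib_left mult_ac)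
qed



lemma detD_cont:
  assumes c: "\<And>a b. a < n \<Longrightarrow> b < n \<Longrightarrow> isCont (\<lambda>\<mu>. Y \<mu> $$ (a,b)) \<mu>0"
  shows "isCont (\<lambda>\<mu>. detD n (Y \<mu>) Z) \<mu>0"
  unfolding detD_def
proof (rule continuous_sum)
  fix p assume p: "p \<in> {p. p permutes {0..<n}}"
  show "isCont (\<lambda>\<mu>. signof p * (\<Sum>l\<in>{0..<n}. Z $$ (l, p l) * (\<Prod>i\<in>{0..<n}-{l}. Y \<mu> $$ (i, p i)))) \<mu>0"
  proof (rule continuous_mult[OF continuous_const], rule continuous_sum)
    fix l assume l: "l \<in> {0..<n}"
    show "isCont (\<lambda>\<mu>. Z $$ (l, p l) * (\<Prod>i\<in>{0..<n}-{l}. Y \<mu> $$ (i, p i))) \<mu>0"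
    proof (rule continuous_mult[OF continuous_const], rule continuous_prod)
      fix i assume i: "i \<in> {0..<n}-{l}"
      have "p i < n" using permutes_lt[of p n i] p i by auto
      then show "isCont (\<lambda>\<mu>. Y \<mu> $$ (i, p i)) \<mu>0" using c i by auto
    qed
  qed
qed

section \<open>Infinitesimal conjugation invariance of the adjugate\<close>

lemma mderiv_line:
  assumes Y: "Y \<in> carrier_mat n n" and Z: "Z \<in> carrier_mat n n"
  shows "mderiv n (\<lambda>t. Y + t \<cdot>\<^sub>m Z) Z t0"
  unfolding mderiv_def
proof (intro conjI allI impI)
  fix i j assume ij: "i < n" "j < n"
  have "(\<lambda>t. (Y + t \<cdot>\<^sub>m Z) $$ (i,j)) = (\<lambda>t. Y $$ (i,j) + t * Z $$ (i,j))"
    using Y Z ij by (intro ext) simp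
  moreover have "((\<lambda>t. Y $$ (i,j) + t * Z $$ (i,j)) has_real_derivative Z $$ (i,j)) (at t0)"
    by (auto intro!: derivative_eq_intros)
  ultimately show "((\<lambda>t. (Y + t \<cdot>\<^sub>m Z) $$ (i,j)) has_real_derivative Z $$ (i,j)) (at t0)" by simp
qed (use Y Z in auto)

lemma mat_eq_smult_cancel:
  fixes A B :: "real mat"
  assumes "A \<in> carrier_mat n n" "B \<in> carrier_mat n n" "d \<cdot>\<^sub>m A = d \<cdot>\<^sub>m B" "d \<noteq> 0"
  shows "A = B"
proof (rule eq_matI)
  fix i j assume ij: "i < dim_row B" "j < dim_col B"
  have "(d \<cdot>\<^sub>m A) $$ (i,j) = (d \<cdot>\<^sub>m B) $$ (i,j)" using assms(3) by simp
  moreover have "(d \<cdot>\<^sub>m A) $$ (i,j) = d * A $$ (i,j)" "(d \<cdot>\<^sub>m B) $$ (i,j) = d * B $$ (i,j)"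
    using assms(1,2) ij by auto
  ultimately show "A $$ (i,j) = B $$ (i,j)" using assms(4) by simp
qed (use assms in auto)

lemma adjD_comm_inv:
  assumes Y: "Y \<in> carrier_mat n n" and M: "M \<in> carrier_mat n n" and d: "det Y \<noteq> 0"
  shows "adjD n Y (M * Y - Y * M) = M * adj_mat Y - adj_mat Y * M"
proof -
  define Z where "Z = M * Y - Y * M"
  define A where "A = adj_mat Y"
  define A' where "A' = adjD n Y Z"
  have Zc: "Z \<in> carrier_mat n n" using Y M by (auto simp: Z_def)
  have Ac: "A \<in> carrier_mat n n" using adj_mat(1)[OF Y] by (simp add: A_def)
  have A'c: "A' \<in> carrier_mat n n" by (simp add: A'_def)
  have YA: "Y * A = det Y \<cdot>\<^sub>m 1\<^sub>m n" "A * Y = det Y \<cdot>\<^sub>m 1\<^sub>m n"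
    using adj_mat(2,3)[OF Y] by (auto simp: A_def)
  define Yt where "Yt t = Y + t \<cdot>\<^sub>m Z" for t
  have Yt0: "Yt 0 = Y" using Y Zc by (intro eq_matI) (auto simp: Yt_def)
  have Ytc: "Yt t \<in> carrier_mat n n" for t using Y Zc by (simp add: Yt_def)
  have dY: "mderiv n Yt Z 0" unfolding Yt_def by (rule mderiv_line[OF Y Zc])
  have dA: "mderiv n (\<lambda>t. adj_mat (Yt t)) A' 0"
    using mderiv_adj[OF dY] by (simp add: Yt0 A'_def)
  have dP: "mderiv n (\<lambda>t. Yt t * adj_mat (Yt t)) (Z * A + Y * A') 0"
    using mderiv_mult[OF dY dA] by (simp add: Yt0 A_def)
  have dd: "((\<lambda>t. det (Yt t)) has_real_derivative detD n Y Z) (at 0)"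
    using det_deriv[OF dY] by (simp add: Yt0)
  have jac: "detD n Y Z = 0"
  proof -
    have "detD n Y Z = mtrace (A * Z)" using detD_jacobi[OF Y Zc] by (simp add: A_def)
    also have "A * Z = A * M * Y - A * Y * M"
      using Ac M Y by (simp add: Z_def mult_minus_distrib_mat[of _ n n _ n])
    also have "mtrace (A * M * Y - A * Y * M) = mtrace (A * M * Y) - mtrace (A * Y * M)"
      using Ac M Y by (intro mtrace_minus) auto
    also have "mtrace (A * M * Y) = mtrace (Y * (A * M))"
      using Ac M Y by (intro mtrace_comm) auto
    also have "Y * (A * M) = Y * A * M" using Ac M Y by simp
    finally show ?thesis using YA by simp
  qed
  have key: "Z * A + Y * A' = 0\<^sub>m n n"
  proof (rule eq_matI)
    fix i j assume ij: "i < dim_row (0\<^sub>m n n :: real mat)" "j < dim_col (0\<^sub>m n n :: real mat)"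
    then have ij': "i < n" "j < n" by auto
    have d1: "((\<lambda>t. (Yt t * adj_mat (Yt t)) $$ (i,j)) has_real_derivative (Z * A + Y * A') $$ (i,j)) (at 0)"
      using dP ij' by (simp add: mderiv_def)
    have "(\<lambda>t. (Yt t * adj_mat (Yt t)) $$ (i,j)) = (\<lambda>t. det (Yt t) * (if i = j then 1 else 0))"
      using adj_mat(2)[OF Ytc] ij' by (intro ext) simp
    moreover have "((\<lambda>t. det (Yt t) * (if i = j then 1 else 0)) has_real_derivative detD n Y Z * (if i = j then 1 else 0)) (at 0)"
      by (intro DERIV_cmult_right dd)  
    ultimately have d2: "((\<lambda>t. (Yt t * adj_mat (Yt t)) $$ (i,j)) has_real_derivative 0) (at 0)"
      using jac by simp
    show "(Z * A + Y * A') $$ (i,j) = 0\<^sub>m n n $$ (i,j)"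
      using DERIV_unique[OF d1 d2] ij' by simp
  qed (use Zc Ac Y A'c in auto)
  have "det Y \<cdot>\<^sub>m 1\<^sub>m n * A' = det Y \<cdot>\<^sub>m (1\<^sub>m n * A')"
    by (rule mult_smult_assoc_mat) (use A'c in auto)
  then have "det Y \<cdot>\<^sub>m A' = (A * Y) * A'" using YA A'c by simp
  also have "\<dots> = A * (Y * A')" using Ac Y A'c by simp
  also have "Y * A' = - (Z * A)"
  proof -
    have "Y * A' = (Z * A + Y * A') - Z * A" using Zc Ac Y A'c by (intro eq_matI) auto
    then show ?thesis using key Zc Ac by (intro eq_matI) auto
  qed
  also have "A * (- (Z * A)) = - (A * Z * A)" using Ac Zc by simp
  also have "A * Z * A = det Y \<cdot>\<^sub>m (A * M) - det Y \<cdot>\<^sub>m (M * A)"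
  proof -
    have AZ: "A * Z = A * M * Y - A * Y * M"
      using Ac M Y by (simp add: Z_def mult_minus_distrib_mat[of _ n n _ n])
    have c1: "A * M * Y \<in> carrier_mat n n" "A * Y * M \<in> carrier_mat n n" "A * M \<in> carrier_mat n n"
      by (rule mult_carrier_mat[OF mult_carrier_mat[OF Ac M] Y], rule mult_carrier_mat[OF mult_carrier_mat[OF Ac Y] M], rule mult_carrier_mat[OF Ac M])
    have s1: "A * Z * A = A * M * Y * A - A * Y * M * A"
      unfolding AZ by (rule minus_mult_distrib_mat[OF c1(1) c1(2) Ac])
    have s2: "A * M * Y * A = det Y \<cdot>\<^sub>m (A * M)"
    proof -
      have "A * M * Y * A = (A * M) * (Y * A)" by (rule assoc_mult_mat[OF c1(3) Y Ac])
      also have "\<dots> = det Y \<cdot>\<^sub>m ((A * M) * 1\<^sub>m n)"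
        unfolding YA(1) by (rule mult_smult_distrib[OF c1(3) one_carrier_mat])
      also have "(A * M) * 1\<^sub>m n = A * M" by (rule right_mult_one_mat[OF c1(3)])
      finally show ?thesis .
    qed
    have s3: "A * Y * M * A = det Y \<cdot>\<^sub>m (M * A)"
    proof -
      have m1: "det Y \<cdot>\<^sub>m 1\<^sub>m n * M = det Y \<cdot>\<^sub>m (1\<^sub>m n * M)"
        by (rule mult_smult_assoc_mat[OF one_carrier_mat M])
      have m2: "1\<^sub>m n * M = M" by (rule left_mult_one_mat[OF M])
      have m3: "det Y \<cdot>\<^sub>m M * A = det Y \<cdot>\<^sub>m (M * A)"
        by (rule mult_smult_assoc_mat[OF M Ac])
      have "A * Y * M * A = det Y \<cdot>\<^sub>m 1\<^sub>m n * M * A" by (simp only: YA(2))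
      also have "\<dots> = det Y \<cdot>\<^sub>m M * A" by (simp only: m1 m2)
      also have "\<dots> = det Y \<cdot>\<^sub>m (M * A)" by (rule m3)
      finally show ?thesis .
    qed
    show ?thesis unfolding s1 s2 s3 ..
  qed
  also have "- (det Y \<cdot>\<^sub>m (A * M) - det Y \<cdot>\<^sub>m (M * A)) = det Y \<cdot>\<^sub>m (M * A - A * M)"
    using Ac M by (intro eq_matI) (auto simp: right_diff_distrib)
  finally have eq: "det Y \<cdot>\<^sub>m A' = det Y \<cdot>\<^sub>m (M * A - A * M)" .
  have c2: "M * A - A * M \<in> carrier_mat n n" using Ac M by auto
  have "A' = M * A - A * M" by (rule mat_eq_smult_cancel[OF A'c c2 eq d])
  then show ?thesis by (simp add: A'_def A_def Z_def)
qed

lemma det_shift_finite: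
  assumes Y: "(Y :: real mat) \<in> carrier_mat n n"
  shows "finite {\<mu>::real. det (Y + \<mu> \<cdot>\<^sub>m 1\<^sub>m n) = 0}"
proof -
  have Yc: "- Y \<in> carrier_mat n n" using Y by simp
  have eq: "det (Y + \<mu> \<cdot>\<^sub>m 1\<^sub>m n) = poly (char_poly (- Y)) \<mu>" for \<mu>
    unfolding char_poly_def
  proof (rule poly_det_cong[symmetric, of _ n])
    show "Y + \<mu> \<cdot>\<^sub>m 1\<^sub>m n \<in> carrier_mat n n" using Y by simp
    show "char_poly_matrix (- Y) \<in> carrier_mat n n" using Yc by simp
    fix a b assume ab: "a < n" "b < n"
    show "poly (char_poly_matrix (- Y) $$ (a, b)) \<mu> = (Y + \<mu> \<cdot>\<^sub>m 1\<^sub>m n) $$ (a, b)"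
      using Y ab by (simp add: char_poly_matrix_def)
  qed
  have "coeff (char_poly (- Y)) n = 1" using degree_monic_char_poly[OF Yc] by simp
  then have "char_poly (- Y) \<noteq> 0" by auto
  then have "finite {\<mu>. poly (char_poly (- Y)) \<mu> = 0}" by (rule poly_roots_finite)
  then show ?thesis by (simp add: eq)
qed

lemma shift_comm:
  fixes Y M :: "real mat"
  assumes Y: "Y \<in> carrier_mat n n" and M: "M \<in> carrier_mat n n"
  shows "M * (Y + \<mu> \<cdot>\<^sub>m 1\<^sub>m n) - (Y + \<mu> \<cdot>\<^sub>m 1\<^sub>m n) * M = M * Y - Y * M"
proof -
  have S: "\<mu> \<cdot>\<^sub>m 1\<^sub>m n \<in> carrier_mat n n" by simp
  have e1: "M * (Y + \<mu> \<cdot>\<^sub>m 1\<^sub>m n) = M * Y + \<mu> \<cdot>\<^sub>m M"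
  proof -
    have "M * (Y + \<mu> \<cdot>\<^sub>m 1\<^sub>m n) = M * Y + M * (\<mu> \<cdot>\<^sub>m 1\<^sub>m n)"
      by (rule mult_add_distrib_mat[OF M Y S])
    also have "M * (\<mu> \<cdot>\<^sub>m 1\<^sub>m n) = \<mu> \<cdot>\<^sub>m (M * 1\<^sub>m n)"
      by (rule mult_smult_distrib[OF M one_carrier_mat])
    also have "M * 1\<^sub>m n = M" by (rule right_mult_one_mat[OF M])
    finally show ?thesis .
  qed
  have e2: "(Y + \<mu> \<cdot>\<^sub>m 1\<^sub>m n) * M = Y * M + \<mu> \<cdot>\<^sub>m M"
  proof -
    have "(Y + \<mu> \<cdot>\<^sub>m 1\<^sub>m n) * M = Y * M + (\<mu> \<cdot>\<^sub>m 1\<^sub>m n) * M"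
      by (rule add_mult_distrib_mat[OF Y S M])
    also have "(\<mu> \<cdot>\<^sub>m 1\<^sub>m n) * M = \<mu> \<cdot>\<^sub>m (1\<^sub>m n * M)"
      by (rule mult_smult_assoc_mat[OF one_carrier_mat M])
    also have "1\<^sub>m n * M = M" by (rule left_mult_one_mat[OF M])
    finally show ?thesis .
  qed
  have c: "M * Y \<in> carrier_mat n n" "Y * M \<in> carrier_mat n n"
    by (rule mult_carrier_mat[OF M Y], rule mult_carrier_mat[OF Y M])
  have c2: "M * Y + \<mu> \<cdot>\<^sub>m M \<in> carrier_mat n n" "Y * M + \<mu> \<cdot>\<^sub>m M \<in> carrier_mat n n"
    "\<mu> \<cdot>\<^sub>m M \<in> carrier_mat n n" "M * Y - Y * M \<in> carrier_mat n n"
    "M * Y + \<mu> \<cdot>\<^sub>m M - (Y * M + \<mu> \<cdot>\<^sub>m M) \<in> carrier_mat n n"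
    by (rule add_carrier_mat[OF smult_carrier_mat[OF M]], rule add_carrier_mat[OF smult_carrier_mat[OF M]],
      rule smult_carrier_mat[OF M], rule minus_carrier_mat[OF c(2)],
      rule minus_carrier_mat[OF add_carrier_mat[OF smult_carrier_mat[OF M]]])
  show ?thesis unfolding e1 e2
  proof (rule eq_matI)
    fix a b assume "a < dim_row (M * Y - Y * M)" "b < dim_col (M * Y - Y * M)"
    then have ab: "a < n" "b < n" unfolding carrier_matD[OF c2(4)] .
    show "(M * Y + \<mu> \<cdot>\<^sub>m M - (Y * M + \<mu> \<cdot>\<^sub>m M)) $$ (a, b) = (M * Y - Y * M) $$ (a, b)"
      by (simp only: index_minus_carrier[OF c2(1) c2(2) ab] index_add_carrier[OF c(1) c2(3) ab]
        index_add_carrier[OF c(2) c2(3) ab] index_minus_carrier[OF c ab])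
  qed (simp_all only: carrier_matD[OF c2(4)] carrier_matD[OF c2(5)])
qed

lemma adjD_comm:
  assumes Y: "Y \<in> carrier_mat n n" and M: "M \<in> carrier_mat n n"
  shows "adjD n Y (M * Y - Y * M) = M * adj_mat Y - adj_mat Y * M"
proof -
  define Z where "Z = M * Y - Y * M"
  define Ym where "Ym \<mu> = Y + \<mu> \<cdot>\<^sub>m 1\<^sub>m n" for \<mu> :: real
  have Ymc: "Ym \<mu> \<in> carrier_mat n n" for \<mu> using Y by (simp add: Ym_def)
  have Y0: "Ym 0 = Y" using Y by (intro eq_matI) (auto simp: Ym_def)
  have Zeq: "M * Ym \<mu> - Ym \<mu> * M = Z" for \<mu> unfolding Ym_def Z_def by (rule shift_comm[OF Y M])
  have Ac: "adj_mat (Ym \<mu>) \<in> carrier_mat n n" for \<mu> by (rule adj_mat(1)[OF Ymc])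
  have dYm: "mderiv n Ym (1\<^sub>m n) \<mu>0" for \<mu>0
    unfolding Ym_def by (rule mderiv_line[OF Y one_carrier_mat])
  have cA: "isCont (\<lambda>\<mu>. adj_mat (Ym \<mu>) $$ (a,b)) \<mu>0" if "a < n" "b < n" for a b \<mu>0
    using mderiv_adj[OF dYm[of \<mu>0]] that by (auto simp: mderiv_def intro: DERIV_isCont)
  have cY: "isCont (\<lambda>\<mu>. Ym \<mu> $$ (a,b)) \<mu>0" if "a < n" "b < n" for a b \<mu>0
    using dYm[of \<mu>0] that by (auto simp: mderiv_def intro: DERIV_isCont)
  have fin: "finite {\<mu>. det (Ym \<mu>) = 0}" unfolding Ym_def by (rule det_shift_finite[OF Y])
  have ev: "eventually (\<lambda>\<mu>. det (Ym \<mu>) \<noteq> 0) (at (0::real))"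
  proof -
    have "\<not> (0::real) islimpt {\<mu>. det (Ym \<mu>) = 0}" using islimpt_finite[OF fin] by blast
    then show ?thesis unfolding islimpt_iff_eventually by simp
  qed
  have cc: "M * adj_mat Y - adj_mat Y * M \<in> carrier_mat n n"
    by (rule minus_carrier_mat[OF mult_carrier_mat[OF adj_mat(1)[OF Y] M]])
  show ?thesis unfolding Z_def[symmetric]
  proof (rule eq_matI)
    fix i j assume ij0: "i < dim_row (M * adj_mat Y - adj_mat Y * M)" "j < dim_col (M * adj_mat Y - adj_mat Y * M)"
    have ij: "i < n" "j < n" using ij0 unfolding carrier_matD[OF cc] .
    define f where "f \<mu> = adjD n (Ym \<mu>) Z $$ (i,j) - (M * adj_mat (Ym \<mu>) - adj_mat (Ym \<mu>) * M) $$ (i,j)" for \<mu>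
    have fz: "eventually (\<lambda>\<mu>. f \<mu> = 0) (at (0::real))"
    proof (rule eventually_mono[OF ev])
      fix \<mu> assume "det (Ym \<mu>) \<noteq> 0"
      from adjD_comm_inv[OF Ymc M this] show "f \<mu> = 0" by (simp add: f_def Zeq)
    qed
    have fexp: "f \<mu> = (-1)^(j+i) * detD (n-1) (mat_delete (Ym \<mu>) j i) (mat_delete Z j i) -
        ((\<Sum>l<n. M $$ (i,l) * adj_mat (Ym \<mu>) $$ (l,j)) - (\<Sum>l<n. adj_mat (Ym \<mu>) $$ (i,l) * M $$ (l,j)))" for \<mu>
    proof -
      have c1: "M * adj_mat (Ym \<mu>) \<in> carrier_mat n n" "adj_mat (Ym \<mu>) * M \<in> carrier_mat n n"
        by (rule mult_carrier_mat[OF M Ac], rule mult_carrier_mat[OF Ac M])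
      have "(M * adj_mat (Ym \<mu>) - adj_mat (Ym \<mu>) * M) $$ (i,j) = (M * adj_mat (Ym \<mu>)) $$ (i,j) - (adj_mat (Ym \<mu>) * M) $$ (i,j)"
        by (rule index_minus_carrier[OF c1 ij])
      also have "\<dots> = (\<Sum>l<n. M $$ (i,l) * adj_mat (Ym \<mu>) $$ (l,j)) - (\<Sum>l<n. adj_mat (Ym \<mu>) $$ (i,l) * M $$ (l,j))"
        by (simp only: mult_entry[OF M Ac ij] mult_entry[OF Ac M ij])
      finally show ?thesis using ij by (simp add: f_def adjD_entry)
    qed
    have cont: "isCont f 0"
    proof -
      have cD: "isCont (\<lambda>\<mu>. detD (n-1) (mat_delete (Ym \<mu>) j i) (mat_delete Z j i)) 0"
      proof (rule detD_cont)
        fix a b assume ab: "a < n - 1" "b < n - 1"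
        have "(\<lambda>\<mu>. mat_delete (Ym \<mu>) j i $$ (a,b)) = (\<lambda>\<mu>. Ym \<mu> $$ (if a < j then a else Suc a, if b < i then b else Suc b))"
          using ab by (intro ext) (simp add: mat_delete_entry[OF Ymc])
        moreover have "isCont (\<lambda>\<mu>. Ym \<mu> $$ (if a < j then a else Suc a, if b < i then b else Suc b)) 0"
          by (rule cY) (use ab in auto)
        ultimately show "isCont (\<lambda>\<mu>. mat_delete (Ym \<mu>) j i $$ (a,b)) 0" by simp
      qed
      have "isCont (\<lambda>\<mu>. (-1)^(j+i) * detD (n-1) (mat_delete (Ym \<mu>) j i) (mat_delete Z j i) -
        ((\<Sum>l<n. M $$ (i,l) * adj_mat (Ym \<mu>) $$ (l,j)) - (\<Sum>l<n. adj_mat (Ym \<mu>) $$ (i,l) * M $$ (l,j)))) 0"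
      proof -
        have s1: "isCont (\<lambda>\<mu>. \<Sum>l<n. M $$ (i,l) * adj_mat (Ym \<mu>) $$ (l,j)) 0"
        proof (rule continuous_sum)
          fix l assume "l \<in> {..<n}"
          then have l: "l < n" by simp
          show "isCont (\<lambda>\<mu>. M $$ (i,l) * adj_mat (Ym \<mu>) $$ (l,j)) 0"
            by (rule continuous_mult[OF continuous_const cA[OF l ij(2)]])
        qed
        have s2: "isCont (\<lambda>\<mu>. \<Sum>l<n. adj_mat (Ym \<mu>) $$ (i,l) * M $$ (l,j)) 0"
        proof (rule continuous_sum)
          fix l assume "l \<in> {..<n}"
          then have l: "l < n" by simp
          show "isCont (\<lambda>\<mu>. adj_mat (Ym \<mu>) $$ (i,l) * M $$ (l,j)) 0"
            by (rule continuous_mult[OF cA[OF ij(1) l] continuous_const])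
        qed
        show ?thesis
          by (rule continuous_diff[OF continuous_mult[OF continuous_const cD] continuous_diff[OF s1 s2]])
      qed
      then show ?thesis unfolding fexp[abs_def] .
    qed
    have "(f \<longlongrightarrow> f 0) (at 0)" using cont by (simp add: isCont_def)
    moreover have "(f \<longlongrightarrow> 0) (at 0)" using fz by (rule tendsto_eventually)
    ultimately have "f 0 = 0" by (rule tendsto_unique[OF at_neq_bot])
    then show "adjD n Y Z $$ (i,j) = (M * adj_mat Y - adj_mat Y * M) $$ (i,j)"
      by (simp add: f_def Y0)
  qed (simp_all only: carrier_matD[OF cc] adjD_carrier[THEN carrier_matD(1)] adjD_carrier[THEN carrier_matD(2)])
qed

definition ell :: "(nat \<Rightarrow> real) \<Rightarrow> nat \<Rightarrow> nat \<Rightarrow> real" where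
  "ell x a b = (if a = b then 0 else 1 / (x a - x b))"

lemma Lmat_carrier[simp]: "Lmat n x p \<in> carrier_mat n n" by (simp add: Lmat_def)

lemma Lmat_entry: "i < n \<Longrightarrow> j < n \<Longrightarrow> Lmat n x p $$ (i,j) = (if i = j then p i else ell x i j)"
  by (simp add: Lmat_def ell_def)

lemma shiftL_carrier[simp]: "shiftL n lam x p \<in> carrier_mat n n"
  unfolding shiftL_def by (rule minus_carrier_mat[OF Lmat_carrier])

lemma shiftL_entry: "i < n \<Longrightarrow> j < n \<Longrightarrow>
  shiftL n lam x p $$ (i,j) = (if i = j then lam - p i else - ell x i j)"
  unfolding shiftL_def
  using index_minus_carrier[OF smult_carrier_mat[OF one_carrier_mat] Lmat_carrier, of i n j lam x p]
  by (simp add: Lmat_entry)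

definition DxL :: "nat \<Rightarrow> (nat \<Rightarrow> real) \<Rightarrow> nat \<Rightarrow> real mat" where
  "DxL n x m = mat n n (\<lambda>(i,j). if i \<noteq> j \<and> i = m then - (1 / (x m - x j)^2)
      else if i \<noteq> j \<and> j = m then 1 / (x i - x m)^2 else 0)"

definition DpL :: "nat \<Rightarrow> nat \<Rightarrow> real mat" where
  "DpL n m = mat n n (\<lambda>(i,j). if i = m \<and> j = m then 1 else 0)"

lemma DxL_carrier[simp]: "DxL n x m \<in> carrier_mat n n" by (simp add: DxL_def)
lemma DpL_carrier[simp]: "DpL n m \<in> carrier_mat n n" by (simp add: DpL_def)

lemma inj_ne: "inj_on x {..<n} \<Longrightarrow> a < n \<Longrightarrow> b < n \<Longrightarrow> a \<noteq> b \<Longrightarrow> x a \<noteq> x b"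
  by (auto dest: inj_onD)

lemma mderiv_Lx:
  assumes inj: "inj_on x {..<n}" and m: "m < n"
  shows "mderiv n (\<lambda>t. Lmat n (x(m := t)) p) (DxL n x m) (x m)"
  unfolding mderiv_def
proof (intro conjI allI impI)
  fix i j assume ij: "i < n" "j < n"
  show "((\<lambda>t. Lmat n (x(m := t)) p $$ (i,j)) has_real_derivative DxL n x m $$ (i,j)) (at (x m))"
  proof (cases "i = j")
    case True
    have "(\<lambda>t. Lmat n (x(m := t)) p $$ (i,j)) = (\<lambda>t. p i)"
      using ij True by (intro ext) (simp add: Lmat_entry)
    moreover have "DxL n x m $$ (i,j) = 0" using ij True by (simp add: DxL_def)
    ultimately show ?thesis by simp
  next
    case False
    show ?thesis
    proof (cases "i = m")
      case im: True
      have ne: "x m - x j \<noteq> 0" using inj_ne[OF inj m ij(2)] False im by auto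
      have "(\<lambda>t. Lmat n (x(m := t)) p $$ (i,j)) = (\<lambda>t. 1 / (t - x j))"
        using ij False im by (intro ext) (simp add: Lmat_entry ell_def)
      moreover have "DxL n x m $$ (i,j) = - (1 / (x m - x j)^2)" using ij False im by (simp add: DxL_def)
      moreover have "((\<lambda>t. 1 / (t - x j)) has_real_derivative - (1 / (x m - x j)^2)) (at (x m))"
      proof -
        have d0: "((\<lambda>t. t - x j) has_real_derivative 1) (at (x m))" by (auto intro!: derivative_eq_intros)
        from DERIV_inverse_fun[OF d0] ne show ?thesis by (simp add: inverse_eq_divide numeral_2_eq_2)
      qed
      ultimately show ?thesis by simp
    next
      case inm: False
      show ?thesis
      proof (cases "j = m")
        case jm: True
        have ne: "x i - x m \<noteq> 0" using inj_ne[OF inj ij(1) m] inm by auto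
        have "(\<lambda>t. Lmat n (x(m := t)) p $$ (i,j)) = (\<lambda>t. 1 / (x i - t))"
          using ij False inm jm by (intro ext) (simp add: Lmat_entry ell_def)
        moreover have "DxL n x m $$ (i,j) = 1 / (x i - x m)^2" using ij False inm jm by (simp add: DxL_def)
        moreover have "((\<lambda>t. 1 / (x i - t)) has_real_derivative 1 / (x i - x m)^2) (at (x m))"
        proof -
          have d0: "((\<lambda>t. x i - t) has_real_derivative -1) (at (x m))" by (auto intro!: derivative_eq_intros)
          from DERIV_inverse_fun[OF d0] ne show ?thesis by (simp add: inverse_eq_divide numeral_2_eq_2)
        qed
        ultimately show ?thesis by simp
      next
        case jnm: False
        have "(\<lambda>t. Lmat n (x(m := t)) p $$ (i,j)) = (\<lambda>t. ell x i j)"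
          using ij False inm jnm by (intro ext) (simp add: Lmat_entry ell_def)
        moreover have "DxL n x m $$ (i,j) = 0" using ij False inm jnm by (simp add: DxL_def)
        ultimately show ?thesis by simp
      qed
    qed
  qed
qed auto

lemma mderiv_Lp:
  assumes m: "m < n"
  shows "mderiv n (\<lambda>t. Lmat n x (p(m := t))) (DpL n m) (p m)"
  unfolding mderiv_def
proof (intro conjI allI impI)
  fix i j assume ij: "i < n" "j < n"
  show "((\<lambda>t. Lmat n x (p(m := t)) $$ (i,j)) has_real_derivative DpL n m $$ (i,j)) (at (p m))"
  proof (cases "i = m \<and> j = m")
    case True
    have "(\<lambda>t. Lmat n x (p(m := t)) $$ (i,j)) = (\<lambda>t. t)"
      using ij True by (intro ext) (simp add: Lmat_entry)
    moreover have "DpL n m $$ (i,j) = 1" using ij True by (simp add: DpL_def)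
    ultimately show ?thesis by simp
  next
    case False
    have "(\<lambda>t. Lmat n x (p(m := t)) $$ (i,j)) = (\<lambda>t. Lmat n x p $$ (i,j))"
      using ij False by (intro ext) (auto simp: Lmat_entry)
    moreover have "DpL n m $$ (i,j) = 0" using ij False by (auto simp: DpL_def)
    ultimately show ?thesis by simp
  qed
qed auto

lemma mderiv_shift:
  assumes Y: "mderiv n Y Y' t0"
  shows "mderiv n (\<lambda>t. lam \<cdot>\<^sub>m 1\<^sub>m n - Y t) (- Y') t0"
  unfolding mderiv_def
proof (intro conjI allI impI)
  have c: "\<And>t. Y t \<in> carrier_mat n n" "Y' \<in> carrier_mat n n" using Y by (auto simp: mderiv_def)
  show "\<And>t. lam \<cdot>\<^sub>m 1\<^sub>m n - Y t \<in> carrier_mat n n" by (rule minus_carrier_mat[OF c(1)])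
  show "- Y' \<in> carrier_mat n n" using c(2) by simp
  fix i j assume ij: "i < n" "j < n"
  have "(\<lambda>t. (lam \<cdot>\<^sub>m 1\<^sub>m n - Y t) $$ (i,j)) = (\<lambda>t. lam * (if i = j then 1 else 0) - Y t $$ (i,j))"
  proof (rule ext)
    fix t show "(lam \<cdot>\<^sub>m 1\<^sub>m n - Y t) $$ (i,j) = lam * (if i = j then 1 else 0) - Y t $$ (i,j)"
      using index_minus_carrier[OF smult_carrier_mat[OF one_carrier_mat] c(1)[of t] ij] ij by simp
  qed
  moreover have "(- Y') $$ (i,j) = - (Y' $$ (i,j))" using c(2) ij by simp
  moreover have "((\<lambda>t. lam * (if i = j then 1 else 0) - Y t $$ (i,j)) has_real_derivative - (Y' $$ (i,j))) (at t0)"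
    using Y ij by (auto simp: mderiv_def intro!: derivative_eq_intros)
  ultimately show "((\<lambda>t. (lam \<cdot>\<^sub>m 1\<^sub>m n - Y t) $$ (i,j)) has_real_derivative (- Y') $$ (i,j)) (at t0)" by simp
qed

lemma mderiv_trace:
  assumes Y: "mderiv n Y Y' t0"
  shows "((\<lambda>t. mtrace (Y t)) has_real_derivative mtrace Y') (at t0)"
proof -
  have c: "\<And>t. Y t \<in> carrier_mat n n" "Y' \<in> carrier_mat n n" using Y by (auto simp: mderiv_def)
  have "(\<lambda>t. mtrace (Y t)) = (\<lambda>t. \<Sum>i<n. Y t $$ (i,i))"
    by (intro ext) (rule mtrace_alt[OF c(1)])
  moreover have "((\<lambda>t. \<Sum>i<n. Y t $$ (i,i)) has_real_derivative (\<Sum>i<n. Y' $$ (i,i))) (at t0)"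
    using Y by (intro DERIV_sum) (auto simp: mderiv_def)
  ultimately show ?thesis by (simp add: mtrace_alt[OF c(2)])
qed

lemma deriv_trace_pow:
  assumes Y: "mderiv n Y Y' t0"
  shows "((\<lambda>t. mtrace (Y t ^\<^sub>m k)) has_real_derivative real k * mtrace (Y t0 ^\<^sub>m (k - 1) * Y')) (at t0)"
proof -
  have c: "Y t0 \<in> carrier_mat n n" "Y' \<in> carrier_mat n n" using Y by (auto simp: mderiv_def)
  have P: "powD n (Y t0) Y' k \<in> carrier_mat n n" by (rule powD_carrier[OF c])
  have "mtrace (powD n (Y t0) Y' k) = mtrace (powD n (Y t0) Y' k * 1\<^sub>m n)"
    by (simp add: right_mult_one_mat[OF P])
  also have "\<dots> = real k * mtrace (Y t0 ^\<^sub>m (k - 1) * Y' * 1\<^sub>m n)"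
    by (rule mtrace_powD[OF c one_carrier_mat]) (simp add: left_mult_one_mat[OF c(1)] right_mult_one_mat[OF c(1)])
  also have "Y t0 ^\<^sub>m (k - 1) * Y' * 1\<^sub>m n = Y t0 ^\<^sub>m (k - 1) * Y'"
    by (rule right_mult_one_mat[OF mult_carrier_mat[OF pow_carrier_mat[OF c(1)] c(2)]])
  finally have e: "mtrace (powD n (Y t0) Y' k) = real k * mtrace (Y t0 ^\<^sub>m (k - 1) * Y')" .
  show ?thesis using mderiv_trace[OF mderiv_pow[OF Y, of k]] unfolding e .
qed

section \<open>The Lax identity (index form)\<close>

lemma lax_entry:
  fixes l0 :: "nat \<Rightarrow> nat \<Rightarrow> real" and q :: "nat \<Rightarrow> real" and B :: "real mat"
  assumes diag0: "\<And>a. l0 a a = 0"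
    and anti: "\<And>a b. l0 a b = - l0 b a"
    and three: "\<And>i j l. i < n \<Longrightarrow> j < n \<Longrightarrow> l < n \<Longrightarrow> i \<noteq> j \<Longrightarrow> l \<noteq> i \<Longrightarrow> l \<noteq> j \<Longrightarrow>
       l0 i l * l0 l j = l0 i j * (l0 i l + l0 l j)"
    and comm: "\<And>i j. i < n \<Longrightarrow> j < n \<Longrightarrow>
       q i * B $$ (i,j) - (\<Sum>l<n. l0 i l * B $$ (l,j)) = B $$ (i,j) * q j - (\<Sum>l<n. B $$ (i,l) * l0 l j)"
    and ij: "i < n" "j < n"
    and Mdef: "\<And>a b. a < n \<Longrightarrow> b < n \<Longrightarrow> Mm a b = B $$ (a,b) * l0 a b - (if a = b then (\<Sum>l<n. B $$ (a,l) * l0 a l) else 0)"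
    and Sdef: "\<And>a b. a < n \<Longrightarrow> b < n \<Longrightarrow> Sm a b = (if a = b then q a else 0) - l0 a b"
  shows "(\<Sum>l<n. Mm i l * Sm l j) - (\<Sum>l<n. Sm i l * Mm l j) =
     (if i = j then (\<Sum>l<n. (l0 i l)^2 * (B $$ (i,l) - B $$ (l,i))) else (B $$ (i,i) - B $$ (j,j)) * (l0 i j)^2)"
proof -
  define r where "r a = (\<Sum>l<n. B $$ (a,l) * l0 a l)" for a
  have flip: "(\<Sum>l<n. l0 l a * f l) = - (\<Sum>l<n. l0 a l * f l)" for a and f :: "nat \<Rightarrow> real"
  proof -
    have "(\<Sum>l<n. l0 l a * f l) = (\<Sum>l<n. - (l0 a l * f l))"
    proof (intro sum.cong refl)
      fix l
      have e: "l0 l a = - l0 a l" by (rule anti)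
      show "l0 l a * f l = - (l0 a l * f l)" by (simp add: e)
    qed
    then show ?thesis by (simp add: sum_negf)
  qed
  have P1: "(\<Sum>l<n. Mm i l * Sm l j) = B $$ (i,j) * l0 i j * q j - (\<Sum>l<n. B $$ (i,l) * l0 i l * l0 l j)
      - (if i = j then r i * q j else 0) + r i * l0 i j"
  proof -
    have "(\<Sum>l<n. Mm i l * Sm l j) = (\<Sum>l<n. (if l = j then B $$ (i,l) * l0 i l * q j else 0)
        - B $$ (i,l) * l0 i l * l0 l j - (if l = i then (if i = j then r i * q j else 0) else 0)
        + (if l = i then r i * l0 l j else 0))"
    proof (intro sum.cong refl)
      fix l assume "l \<in> {..<n}"
      then have l: "l < n" by simp
      show "Mm i l * Sm l j = (if l = j then B $$ (i,l) * l0 i l * q j else 0)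
        - B $$ (i,l) * l0 i l * l0 l j - (if l = i then (if i = j then r i * q j else 0) else 0)
        + (if l = i then r i * l0 l j else 0)"
        unfolding Mdef[OF ij(1) l] Sdef[OF l ij(2)] r_def[symmetric]
        by (cases "l = j"; cases "l = i"; simp add: diag0 left_diff_distrib right_diff_distrib)
    qed
    also have "\<dots> = B $$ (i,j) * l0 i j * q j - (\<Sum>l<n. B $$ (i,l) * l0 i l * l0 l j)
      - (if i = j then r i * q j else 0) + r i * l0 i j"
      using ij by (simp add: sum.distrib sum_subtractf)
    finally show ?thesis .
  qed
  have P2: "(\<Sum>l<n. Sm i l * Mm l j) = q i * B $$ (i,j) * l0 i j - (if i = j then q i * r j else 0)
      - (\<Sum>l<n. l0 i l * B $$ (l,j) * l0 l j) + l0 i j * r j"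
  proof -
    have "(\<Sum>l<n. Sm i l * Mm l j) = (\<Sum>l<n. (if l = i then q i * B $$ (l,j) * l0 l j else 0)
        - (if l = i then (if i = j then q i * r j else 0) else 0)
        - l0 i l * B $$ (l,j) * l0 l j + (if l = j then l0 i l * r j else 0))"
    proof (intro sum.cong refl)
      fix l assume "l \<in> {..<n}"
      then have l: "l < n" by simp
      show "Sm i l * Mm l j = (if l = i then q i * B $$ (l,j) * l0 l j else 0)
        - (if l = i then (if i = j then q i * r j else 0) else 0)
        - l0 i l * B $$ (l,j) * l0 l j + (if l = j then l0 i l * r j else 0)"
        unfolding Mdef[OF l ij(2)] Sdef[OF ij(1) l] r_def[symmetric]
        by (cases "l = j"; cases "l = i"; simp add: diag0 left_diff_distrib right_diff_distrib)
    qed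
    also have "\<dots> = q i * B $$ (i,j) * l0 i j - (if i = j then q i * r j else 0)
      - (\<Sum>l<n. l0 i l * B $$ (l,j) * l0 l j) + l0 i j * r j"
      using ij by (simp add: sum.distrib sum_subtractf)
    finally show ?thesis .
  qed
  show ?thesis
  proof (cases "i = j")
    case True
    have "(\<Sum>l<n. Mm i l * Sm l j) - (\<Sum>l<n. Sm i l * Mm l j) =
        (\<Sum>l<n. l0 i l * B $$ (l,i) * l0 l i) - (\<Sum>l<n. B $$ (i,l) * l0 i l * l0 l i)"
      unfolding P1 P2 using True by (simp add: diag0)
    also have "\<dots> = (\<Sum>l<n. (l0 i l)^2 * (B $$ (i,l) - B $$ (l,i)))"
      unfolding sum_subtractf[symmetric]
    proof (intro sum.cong refl)
      fix l
      have e: "l0 l i = - l0 i l" by (rule anti)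
      show "l0 i l * B $$ (l,i) * l0 l i - B $$ (i,l) * l0 i l * l0 l i = (l0 i l)^2 * (B $$ (i,l) - B $$ (l,i))"
        by (simp only: e) (simp add: power2_eq_square algebra_simps)
    qed
    finally show ?thesis using True by simp
  next
    case False
    define T where "T l = l0 i l * l0 l j * (B $$ (l,j) - B $$ (i,l))" for l
    define U where "U l = l0 i j * (l0 i l + l0 l j) * (B $$ (l,j) - B $$ (i,l))" for l
    have TU: "T l = U l - (if l = i then (l0 i j)^2 * (B $$ (i,j) - B $$ (i,i)) else 0)
                        - (if l = j then (l0 i j)^2 * (B $$ (j,j) - B $$ (i,j)) else 0)" if l: "l < n" for l
    proof (cases "l = i")
      case True then show ?thesis using False by (simp add: T_def U_def diag0 power2_eq_square)
    next
      case li: False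
      show ?thesis
      proof (cases "l = j")
        case True then show ?thesis using li by (simp add: T_def U_def diag0 power2_eq_square)
      next
        case False
        then show ?thesis using li three[OF ij l \<open>i \<noteq> j\<close> li False] by (simp add: T_def U_def)
      qed
    qed
    have sumT: "(\<Sum>l<n. T l) = (\<Sum>l<n. U l) - (l0 i j)^2 * (B $$ (j,j) - B $$ (i,i))"
    proof -
      have "(\<Sum>l<n. T l) = (\<Sum>l<n. U l) - (\<Sum>l<n. if l = i then (l0 i j)^2 * (B $$ (i,j) - B $$ (i,i)) else 0)
            - (\<Sum>l<n. if l = j then (l0 i j)^2 * (B $$ (j,j) - B $$ (i,j)) else 0)"
        by (simp add: TU sum_subtractf)
      also have "\<dots> = (\<Sum>l<n. U l) - (l0 i j)^2 * (B $$ (i,j) - B $$ (i,i)) - (l0 i j)^2 * (B $$ (j,j) - B $$ (i,j))"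
        using ij by simp
      finally show ?thesis by (simp add: algebra_simps)
    qed
    have c1: "(\<Sum>l<n. l0 i l * B $$ (l,j)) - (\<Sum>l<n. B $$ (i,l) * l0 l j) = (q i - q j) * B $$ (i,j)"
      using comm[OF ij] by (simp add: algebra_simps)
    have c2: "(\<Sum>l<n. l0 l j * B $$ (l,j)) = r j"
    proof -
      have "(\<Sum>l<n. l0 j l * B $$ (l,j)) = (\<Sum>l<n. B $$ (j,l) * l0 l j)"
        using comm[OF ij(2) ij(2)] by simp
      moreover have "(\<Sum>l<n. l0 l j * B $$ (l,j)) = - (\<Sum>l<n. l0 j l * B $$ (l,j))"
        by (rule flip)
      moreover have "(\<Sum>l<n. B $$ (j,l) * l0 l j) = - (\<Sum>l<n. B $$ (j,l) * l0 j l)"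
        using flip[of j "\<lambda>l. B $$ (j,l)"] by (simp add: mult.commute)
      ultimately show ?thesis by (simp add: r_def)
    qed
    have sumU: "(\<Sum>l<n. U l) = l0 i j * ((q i - q j) * B $$ (i,j) - r i + r j)"
    proof -
      have "(\<Sum>l<n. U l) = l0 i j * (((\<Sum>l<n. l0 i l * B $$ (l,j)) - (\<Sum>l<n. B $$ (i,l) * l0 l j))
          - (\<Sum>l<n. B $$ (i,l) * l0 i l) + (\<Sum>l<n. l0 l j * B $$ (l,j)))"
        by (simp add: U_def sum_distrib_left sum.distrib sum_subtractf algebra_simps)
      then show ?thesis unfolding c1 c2 by (simp add: r_def)
    qed
    have "(\<Sum>l<n. Mm i l * Sm l j) - (\<Sum>l<n. Sm i l * Mm l j) =
        (q j - q i) * B $$ (i,j) * l0 i j + (\<Sum>l<n. T l) + (r i - r j) * l0 i j"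
    proof -
      have sT: "(\<Sum>l<n. T l) = (\<Sum>l<n. l0 i l * B $$ (l,j) * l0 l j) - (\<Sum>l<n. B $$ (i,l) * l0 i l * l0 l j)"
        unfolding T_def sum_subtractf[symmetric] by (intro sum.cong refl) (simp add: algebra_simps)
      show ?thesis unfolding P1 P2 sT using False by (simp add: algebra_simps)
    qed
    also have "\<dots> = (B $$ (i,i) - B $$ (j,j)) * (l0 i j)^2"
      unfolding sumT sumU by (simp add: algebra_simps power2_eq_square)
    finally show ?thesis using False by simp
  qed
qed



definition hf :: "nat \<Rightarrow> (nat \<Rightarrow> real) \<Rightarrow> real mat \<Rightarrow> real" where
  "hf n x Y = (\<Sum>i<n. x i * ((\<Sum>j<n. Y $$ (i,j)) - Y $$ (i,i)))"

lemma Xmat_carrier[simp]: "Xmat n x \<in> carrier_mat n n" by (simp add: Xmat_def)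

lemma Xmat_entry: "i < n \<Longrightarrow> j < n \<Longrightarrow> Xmat n x $$ (i,j) = (if i = j then x i else 0)"
  by (simp add: Xmat_def)

lemma H_expand:
  "calE n lam x p - calG n lam x p = hf n x (adj_mat (shiftL n lam x p))"
proof -
  define A where "A = adj_mat (shiftL n lam x p)"
  have A: "A \<in> carrier_mat n n" unfolding A_def by (rule adj_mat(1)[OF shiftL_carrier])
  have Av: "A *\<^sub>v vec n (\<lambda>_. 1) \<in> carrier_vec n" using A by simp
  have E: "calE n lam x p = (\<Sum>i<n. x i * (\<Sum>j<n. A $$ (i,j)))"
  proof -
    have "calE n lam x p = (\<Sum>i\<in>{0..<n}. vec n x $ i * (A *\<^sub>v vec n (\<lambda>_. 1)) $ i)"
      unfolding calE_def A_def[symmetric] scalar_prod_def by (simp only: dim_mult_mat_vec carrier_matD(1)[OF A])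
    also have "\<dots> = (\<Sum>i<n. x i * (\<Sum>j<n. A $$ (i,j)))"
      unfolding atLeast0LessThan
    proof (rule sum.cong[OF refl])
      fix i assume "i \<in> {..<n}"
      then have i: "i < n" by simp
      have "(A *\<^sub>v vec n (\<lambda>_. 1)) $ i = Matrix.row A i \<bullet> vec n (\<lambda>_. 1)"
        using A i by simp
      also have "\<dots> = (\<Sum>j<n. A $$ (i,j))"
        using A i by (simp add: scalar_prod_def atLeast0LessThan)
      finally show "vec n x $ i * (A *\<^sub>v vec n (\<lambda>_. 1)) $ i = x i * (\<Sum>j<n. A $$ (i,j))"
        using i by simp
    qed
    finally show ?thesis .
  qed
  have G: "calG n lam x p = (\<Sum>i<n. x i * A $$ (i,i))"
  proof -
    have XA: "Xmat n x * A \<in> carrier_mat n n" by (rule mult_carrier_mat[OF Xmat_carrier A])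
    have "calG n lam x p = (\<Sum>i<n. (Xmat n x * A) $$ (i,i))"
      unfolding calG_def A_def[symmetric] by (rule mtrace_alt[OF XA])
    also have "\<dots> = (\<Sum>i<n. x i * A $$ (i,i))"
    proof (rule sum.cong[OF refl])
      fix i assume "i \<in> {..<n}"
      then have i: "i < n" by simp
      have "(Xmat n x * A) $$ (i,i) = (\<Sum>l<n. Xmat n x $$ (i,l) * A $$ (l,i))"
        by (rule mult_entry[OF Xmat_carrier A i i])
      also have "\<dots> = (\<Sum>l<n. if l = i then x i * A $$ (i,i) else 0)"
        by (rule sum.cong[OF refl]) (use i in \<open>auto simp: Xmat_entry\<close>)
      also have "\<dots> = x i * A $$ (i,i)" using i by simp
      finally show "(Xmat n x * A) $$ (i,i) = x i * A $$ (i,i)" .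
    qed
    finally show ?thesis .
  qed
  show ?thesis unfolding E G hf_def A_def[symmetric]
    by (simp add: right_diff_distrib sum_subtractf)
qed

lemma pdx_H:
  assumes inj: "inj_on x {..<n}" and m: "m < n"
  shows "pdx (\<lambda>x p. calE n lam x p - calG n lam x p) x p m =
     ((\<Sum>j<n. adj_mat (shiftL n lam x p) $$ (m,j)) - adj_mat (shiftL n lam x p) $$ (m,m))
     + hf n x (adjD n (shiftL n lam x p) (- DxL n x m))"
proof -
  define Y where "Y t = shiftL n lam (x(m := t)) p" for t
  have Yd: "mderiv n Y (- DxL n x m) (x m)"
  proof -
    have "Y = (\<lambda>t. lam \<cdot>\<^sub>m 1\<^sub>m n - Lmat n (x(m := t)) p)" by (simp add: Y_def shiftL_def fun_eq_iff)
    then show ?thesis using mderiv_shift[OF mderiv_Lx[OF inj m]] by simp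
  qed
  have Y0: "Y (x m) = shiftL n lam x p" by (simp add: Y_def)
  define Ad where "Ad = adjD n (shiftL n lam x p) (- DxL n x m)"
  have Add: "mderiv n (\<lambda>t. adj_mat (Y t)) Ad (x m)"
    using mderiv_adj[OF Yd] unfolding Y0 Ad_def .
  define g where "g i t = (\<Sum>j<n. adj_mat (Y t) $$ (i,j)) - adj_mat (Y t) $$ (i,i)" for i t
  define gd where "gd i = (\<Sum>j<n. Ad $$ (i,j)) - Ad $$ (i,i)" for i
  have dg: "(g i has_real_derivative gd i) (at (x m))" if i: "i < n" for i
    unfolding g_def[abs_def] gd_def using Add i
    by (auto simp: mderiv_def intro!: DERIV_sum DERIV_diff)
  have dx: "((\<lambda>t. (x(m := t)) i) has_real_derivative (if i = m then 1 else 0)) (at (x m))" for i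
    by (cases "i = m") auto
  have d: "((\<lambda>t. \<Sum>i<n. (x(m := t)) i * g i t) has_real_derivative
      (\<Sum>i<n. (if i = m then 1 else 0) * g i (x m) + gd i * (x(m := x m)) i)) (at (x m))"
  proof (rule DERIV_sum)
    fix i assume "i \<in> {..<n}"
    then have i: "i < n" by simp
    show "((\<lambda>t. (x(m := t)) i * g i t) has_real_derivative
        (if i = m then 1 else 0) * g i (x m) + gd i * (x(m := x m)) i) (at (x m))"
      by (rule DERIV_mult[OF dx dg[OF i]])
  qed
  have fe: "(\<lambda>t. calE n lam (x(m := t)) p - calG n lam (x(m := t)) p) = (\<lambda>t. \<Sum>i<n. (x(m := t)) i * g i t)"
    by (rule ext) (simp add: H_expand hf_def g_def Y_def)
  have "pdx (\<lambda>x p. calE n lam x p - calG n lam x p) x p m =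
        (\<Sum>i<n. (if i = m then 1 else 0) * g i (x m) + gd i * (x(m := x m)) i)"
    unfolding pdx_def fe by (rule DERIV_imp_deriv[OF d])
  also have "\<dots> = g m (x m) + (\<Sum>i<n. x i * gd i)"
  proof -
    have "(\<Sum>i<n. (if i = m then 1 else 0) * g i (x m)) = (\<Sum>i<n. if i = m then g i (x m) else 0)"
      by (rule sum.cong) auto
    also have "\<dots> = g m (x m)" using m by simp
    finally have e1: "(\<Sum>i<n. (if i = m then 1 else 0) * g i (x m)) = g m (x m)" .
    have e2: "(\<Sum>i<n. gd i * (x(m := x m)) i) = (\<Sum>i<n. x i * gd i)" by (simp add: mult.commute)
    show ?thesis unfolding sum.distrib e1 e2 ..
  qed
  finally show ?thesis by (simp add: g_def Y0 hf_def gd_def Ad_def)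
qed

lemma pdp_H:
  assumes m: "m < n"
  shows "pdp (\<lambda>x p. calE n lam x p - calG n lam x p) x p m =
     hf n x (adjD n (shiftL n lam x p) (- DpL n m))"
proof -
  define Y where "Y t = shiftL n lam x (p(m := t))" for t
  have Yd: "mderiv n Y (- DpL n m) (p m)"
  proof -
    have "Y = (\<lambda>t. lam \<cdot>\<^sub>m 1\<^sub>m n - Lmat n x (p(m := t)))" by (simp add: Y_def shiftL_def fun_eq_iff)
    then show ?thesis using mderiv_shift[OF mderiv_Lp[OF m]] by simp
  qed
  have Y0: "Y (p m) = shiftL n lam x p" by (simp add: Y_def)
  define Ad where "Ad = adjD n (shiftL n lam x p) (- DpL n m)"
  have Add: "mderiv n (\<lambda>t. adj_mat (Y t)) Ad (p m)"
    using mderiv_adj[OF Yd] unfolding Y0 Ad_def .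
  define g where "g i t = (\<Sum>j<n. adj_mat (Y t) $$ (i,j)) - adj_mat (Y t) $$ (i,i)" for i t
  define gd where "gd i = (\<Sum>j<n. Ad $$ (i,j)) - Ad $$ (i,i)" for i
  have dg: "(g i has_real_derivative gd i) (at (p m))" if i: "i < n" for i
    unfolding g_def[abs_def] gd_def using Add i
    by (auto simp: mderiv_def intro!: DERIV_sum DERIV_diff)
  have d: "((\<lambda>t. \<Sum>i<n. x i * g i t) has_real_derivative (\<Sum>i<n. x i * gd i)) (at (p m))"
  proof (rule DERIV_sum)
    fix i assume "i \<in> {..<n}"
    then have i: "i < n" by simp
    show "((\<lambda>t. x i * g i t) has_real_derivative x i * gd i) (at (p m))"
      by (rule DERIV_cmult[OF dg[OF i]])
  qed
  have fe: "(\<lambda>t. calE n lam x (p(m := t)) - calG n lam x (p(m := t))) = (\<lambda>t. \<Sum>i<n. x i * g i t)"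
    by (rule ext) (simp add: H_expand hf_def g_def Y_def)
  have "pdp (\<lambda>x p. calE n lam x p - calG n lam x p) x p m = (\<Sum>i<n. x i * gd i)"
    unfolding pdp_def fe by (rule DERIV_imp_deriv[OF d])
  then show ?thesis by (simp add: hf_def gd_def Ad_def)
qed

lemma mtrace_mult_uminus:
  assumes "P \<in> carrier_mat n n" "Q \<in> carrier_mat n n"
  shows "mtrace (P * (- Q)) = - mtrace (P * Q)"
proof -
  have c: "P * (- Q) \<in> carrier_mat n n" "P * Q \<in> carrier_mat n n"
    using assms by (simp_all add: mult_carrier_mat[OF assms(1)])
  have "mtrace (P * (- Q)) = (\<Sum>i<n. \<Sum>l<n. P $$ (i,l) * (- Q) $$ (l,i))"
    unfolding mtrace_alt[OF c(1)] by (intro sum.cong refl mult_entry[OF assms(1)]) (use assms(2) in auto)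
  also have "\<dots> = - (\<Sum>i<n. \<Sum>l<n. P $$ (i,l) * Q $$ (l,i))"
    using assms(2) by (simp add: sum_negf[symmetric])
  also have "\<dots> = - mtrace (P * Q)"
    unfolding mtrace_alt[OF c(2)] by (simp add: mult_entry[OF assms(1,2)])
  finally show ?thesis .
qed

lemma mtrace_DpL:
  assumes B: "B \<in> carrier_mat n n" and m: "m < n"
  shows "mtrace (B * DpL n m) = B $$ (m,m)"
proof -
  have c: "B * DpL n m \<in> carrier_mat n n" by (rule mult_carrier_mat[OF B DpL_carrier])
  have "mtrace (B * DpL n m) = (\<Sum>i<n. \<Sum>l<n. B $$ (i,l) * DpL n m $$ (l,i))"
    unfolding mtrace_alt[OF c] by (intro sum.cong refl mult_entry[OF B DpL_carrier]) auto
  also have "\<dots> = (\<Sum>i<n. if i = m then B $$ (m,m) else 0)"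
  proof (rule sum.cong[OF refl])
    fix i assume "i \<in> {..<n}"
    then have i: "i < n" by simp
    have "(\<Sum>l<n. B $$ (i,l) * DpL n m $$ (l,i)) = (\<Sum>l<n. if l = m then (if i = m then B $$ (m,m) else 0) else 0)"
      by (rule sum.cong[OF refl]) (use i in \<open>auto simp: DpL_def\<close>)
    also have "\<dots> = (if i = m then B $$ (m,m) else 0)" using m by simp
    finally show "(\<Sum>l<n. B $$ (i,l) * DpL n m $$ (l,i)) = (if i = m then B $$ (m,m) else 0)" .
  qed
  also have "\<dots> = B $$ (m,m)" using m by simp
  finally show ?thesis .
qed

lemma pd_F1:
  assumes inj: "inj_on x {..<n}" and m: "m < n"
  shows "pdx (\<lambda>x p. mtrace (shiftL n lam x p ^\<^sub>m k)) x p m = - real k * mtrace (shiftL n lam x p ^\<^sub>m (k-1) * DxL n x m)"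
    and "pdp (\<lambda>x p. mtrace (shiftL n lam x p ^\<^sub>m k)) x p m = - real k * (shiftL n lam x p ^\<^sub>m (k-1)) $$ (m,m)"
proof -
  have Pc: "shiftL n lam x p ^\<^sub>m (k-1) \<in> carrier_mat n n" by (rule pow_carrier_mat[OF shiftL_carrier])
  define Y where "Y t = shiftL n lam (x(m := t)) p" for t
  have Yd: "mderiv n Y (- DxL n x m) (x m)"
  proof -
    have "Y = (\<lambda>t. lam \<cdot>\<^sub>m 1\<^sub>m n - Lmat n (x(m := t)) p)" by (simp add: Y_def shiftL_def fun_eq_iff)
    then show ?thesis using mderiv_shift[OF mderiv_Lx[OF inj m]] by simp
  qed
  have Y0: "Y (x m) = shiftL n lam x p" by (simp add: Y_def)
  have "pdx (\<lambda>x p. mtrace (shiftL n lam x p ^\<^sub>m k)) x p m = real k * mtrace (shiftL n lam x p ^\<^sub>m (k-1) * - DxL n x m)"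
    unfolding pdx_def Y_def[symmetric] using DERIV_imp_deriv[OF deriv_trace_pow[OF Yd, of k]] unfolding Y0 .
  then show "pdx (\<lambda>x p. mtrace (shiftL n lam x p ^\<^sub>m k)) x p m = - real k * mtrace (shiftL n lam x p ^\<^sub>m (k-1) * DxL n x m)"
    unfolding mtrace_mult_uminus[OF Pc DxL_carrier] by simp
  define Z where "Z t = shiftL n lam x (p(m := t))" for t
  have Zd: "mderiv n Z (- DpL n m) (p m)"
  proof -
    have "Z = (\<lambda>t. lam \<cdot>\<^sub>m 1\<^sub>m n - Lmat n x (p(m := t)))" by (simp add: Z_def shiftL_def fun_eq_iff)
    then show ?thesis using mderiv_shift[OF mderiv_Lp[OF m]] by simp
  qed
  have Z0: "Z (p m) = shiftL n lam x p" by (simp add: Z_def)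
  have "pdp (\<lambda>x p. mtrace (shiftL n lam x p ^\<^sub>m k)) x p m = real k * mtrace (shiftL n lam x p ^\<^sub>m (k-1) * - DpL n m)"
    unfolding pdp_def Z_def[symmetric] using DERIV_imp_deriv[OF deriv_trace_pow[OF Zd, of k]] unfolding Z0 .
  then show "pdp (\<lambda>x p. mtrace (shiftL n lam x p ^\<^sub>m k)) x p m = - real k * (shiftL n lam x p ^\<^sub>m (k-1)) $$ (m,m)"
    unfolding mtrace_mult_uminus[OF Pc DpL_carrier] mtrace_DpL[OF Pc m] by simp
qed

lemma pd_F2:
  assumes inj: "inj_on x {..<n}" and m: "m < n" and k: "k \<ge> 1"
  shows "pdx (Ik n k) x p m = mtrace (Lmat n x p ^\<^sub>m (k-1) * DxL n x m)"
    and "pdp (Ik n k) x p m = (Lmat n x p ^\<^sub>m (k-1)) $$ (m,m)"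
proof -
  have Pc: "Lmat n x p ^\<^sub>m (k-1) \<in> carrier_mat n n" by (rule pow_carrier_mat[OF Lmat_carrier])
  have kk: "real k \<noteq> 0" using k by simp
  define Y where "Y t = Lmat n (x(m := t)) p" for t
  have Yd: "mderiv n Y (DxL n x m) (x m)" unfolding Y_def by (rule mderiv_Lx[OF inj m])
  have Y0: "Y (x m) = Lmat n x p" by (simp add: Y_def)
  have "((\<lambda>t. 1 / real k * mtrace (Y t ^\<^sub>m k)) has_real_derivative 1 / real k * (real k * mtrace (Y (x m) ^\<^sub>m (k - 1) * DxL n x m))) (at (x m))"
    by (rule DERIV_cmult[OF deriv_trace_pow[OF Yd]])
  then have "pdx (Ik n k) x p m = 1 / real k * (real k * mtrace (Lmat n x p ^\<^sub>m (k - 1) * DxL n x m))"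
    unfolding pdx_def Ik_def Y_def[symmetric] using DERIV_imp_deriv unfolding Y0 by blast
  then show "pdx (Ik n k) x p m = mtrace (Lmat n x p ^\<^sub>m (k-1) * DxL n x m)" using kk by simp
  define Z where "Z t = Lmat n x (p(m := t))" for t
  have Zd: "mderiv n Z (DpL n m) (p m)" unfolding Z_def by (rule mderiv_Lp[OF m])
  have Z0: "Z (p m) = Lmat n x p" by (simp add: Z_def)
  have "((\<lambda>t. 1 / real k * mtrace (Z t ^\<^sub>m k)) has_real_derivative 1 / real k * (real k * mtrace (Z (p m) ^\<^sub>m (k - 1) * DpL n m))) (at (p m))"
    by (rule DERIV_cmult[OF deriv_trace_pow[OF Zd]])
  then have "pdp (Ik n k) x p m = 1 / real k * (real k * mtrace (Lmat n x p ^\<^sub>m (k - 1) * DpL n m))"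
    unfolding pdp_def Ik_def Z_def[symmetric] using DERIV_imp_deriv unfolding Z0 by blast
  then show "pdp (Ik n k) x p m = (Lmat n x p ^\<^sub>m (k-1)) $$ (m,m)" unfolding mtrace_DpL[OF Pc m] using kk by simp
qed

lemma ell_diag[simp]: "ell x a a = 0" by (simp add: ell_def)

lemma ell_anti: "ell x a b = - ell x b a"
  by (cases "a = b") (simp_all add: ell_def minus_divide_right)

lemma ell_three:
  assumes inj: "inj_on x {..<n}" and "i < n" "j < n" "l < n" "i \<noteq> j" "l \<noteq> i" "l \<noteq> j"
  shows "ell x i l * ell x l j = ell x i j * (ell x i l + ell x l j)"
proof -
  have a: "x i - x l \<noteq> 0" "x l - x j \<noteq> 0" "x i - x j \<noteq> 0"
    using inj_ne[OF inj] assms by (metis right_minus_eq)+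
  show ?thesis using assms a by (simp add: ell_def field_simps)
qed

lemma ell_mult_diff: "a \<noteq> b \<Longrightarrow> inj_on x {..<n} \<Longrightarrow> a < n \<Longrightarrow> b < n \<Longrightarrow> ell x a b * (x a - x b) = 1"
  using inj_ne[of x n a b] by (simp add: ell_def)

lemma DxL_entry:
  assumes "i < n" "j < n"
  shows "DxL n x m $$ (i,j) = (if i = m then - ((ell x m j)^2) else 0) + (if j = m then (ell x i m)^2 else 0)"
  using assms by (auto simp: DxL_def ell_def power_one_over)

lemma mtrace_DxL:
  assumes B: "B \<in> carrier_mat n n" and a: "a < n"
  shows "mtrace (B * DxL n x a) = (\<Sum>l<n. (ell x a l)^2 * (B $$ (a,l) - B $$ (l,a)))"
proof -
  have c: "B * DxL n x a \<in> carrier_mat n n" by (rule mult_carrier_mat[OF B DxL_carrier])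
  have "mtrace (B * DxL n x a) = (\<Sum>u<n. \<Sum>v<n. B $$ (u,v) * DxL n x a $$ (v,u))"
    unfolding mtrace_alt[OF c] by (intro sum.cong refl mult_entry[OF B DxL_carrier]) auto
  also have "\<dots> = (\<Sum>u<n. - (B $$ (u,a) * (ell x a u)^2) + (if u = a then (\<Sum>v<n. B $$ (a,v) * (ell x v a)^2) else 0))"
  proof (rule sum.cong[OF refl])
    fix u assume "u \<in> {..<n}"
    then have u: "u < n" by simp
    have "(\<Sum>v<n. B $$ (u,v) * DxL n x a $$ (v,u)) =
          (\<Sum>v<n. (if v = a then - (B $$ (u,a) * (ell x a u)^2) else 0) + (if u = a then B $$ (a,v) * (ell x v a)^2 else 0))"
      by (rule sum.cong[OF refl]) (use u in \<open>auto simp: DxL_entry algebra_simps\<close>)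
    also have "\<dots> = - (B $$ (u,a) * (ell x a u)^2) + (if u = a then (\<Sum>v<n. B $$ (a,v) * (ell x v a)^2) else 0)"
      using a by (simp add: sum.distrib)
    finally show "(\<Sum>v<n. B $$ (u,v) * DxL n x a $$ (v,u)) =
        - (B $$ (u,a) * (ell x a u)^2) + (if u = a then (\<Sum>v<n. B $$ (a,v) * (ell x v a)^2) else 0)" .
  qed
  also have "\<dots> = - (\<Sum>u<n. B $$ (u,a) * (ell x a u)^2) + (\<Sum>v<n. B $$ (a,v) * (ell x v a)^2)"
    using a by (simp add: sum.distrib sum_negf sum_subtractf)
  also have "(\<Sum>v<n. B $$ (a,v) * (ell x v a)^2) = (\<Sum>v<n. B $$ (a,v) * (ell x a v)^2)"
  proof (rule sum.cong[OF refl])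
    fix v
    have e: "ell x v a = - ell x a v" by (rule ell_anti)
    show "B $$ (a,v) * (ell x v a)^2 = B $$ (a,v) * (ell x a v)^2" by (simp add: e)
  qed
  also have "- (\<Sum>u<n. B $$ (u,a) * (ell x a u)^2) + (\<Sum>v<n. B $$ (a,v) * (ell x a v)^2) =
      (\<Sum>l<n. (ell x a l)^2 * (B $$ (a,l) - B $$ (l,a)))"
    by (simp add: sum_negf[symmetric] sum.distrib[symmetric] algebra_simps)
  finally show ?thesis .
qed

lemma adjD_linear2:
  fixes N :: nat
  assumes Z: "\<And>a b. a < n \<Longrightarrow> b < n \<Longrightarrow> Z $$ (a,b) = (\<Sum>m<N. c1 m * Z1 m $$ (a,b) + c2 m * Z2 m $$ (a,b))"
    and Zc: "Z \<in> carrier_mat n n" and Z1c: "\<And>m. Z1 m \<in> carrier_mat n n" and Z2c: "\<And>m. Z2 m \<in> carrier_mat n n"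
    and ij: "i < n" "j < n"
  shows "adjD n Y Z $$ (i,j) = (\<Sum>m<N. c1 m * adjD n Y (Z1 m) $$ (i,j) + c2 m * adjD n Y (Z2 m) $$ (i,j))"
proof -
  define K where "K = {..<N} \<times> (UNIV :: bool set)"
  define cc where "cc = (\<lambda>(m, b::bool). if b then c1 m else c2 m)"
  define ZZ where "ZZ = (\<lambda>(m, b::bool). if b then Z1 m else Z2 m)"
  have sumK: "(\<Sum>mb\<in>K. f mb) = (\<Sum>m<N. f (m, True) + f (m, False))" for f :: "nat \<times> bool \<Rightarrow> real"
  proof -
    have "(\<Sum>mb\<in>K. f mb) = (\<Sum>m<N. \<Sum>b\<in>UNIV. f (m,b))"
      unfolding K_def by (simp add: sum.cartesian_product)
    then show ?thesis by (simp add: UNIV_bool add.commute)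
  qed
  have "adjD n Y Z $$ (i,j) = (\<Sum>mb\<in>K. cc mb * adjD n Y (ZZ mb) $$ (i,j))"
  proof (rule adjD_linear[OF _ _ Zc _ ij])
    show "finite K" by (simp add: K_def)
    fix a b assume ab: "a < n" "b < n"
    show "Z $$ (a,b) = (\<Sum>mb\<in>K. cc mb * ZZ mb $$ (a,b))"
      unfolding sumK Z[OF ab] by (simp add: cc_def ZZ_def add.commute)
  next
    fix mb show "ZZ mb \<in> carrier_mat n n" by (cases mb) (simp add: ZZ_def Z1c Z2c)
  qed
  also have "\<dots> = (\<Sum>m<N. c1 m * adjD n Y (Z1 m) $$ (i,j) + c2 m * adjD n Y (Z2 m) $$ (i,j))"
    unfolding sumK by (simp add: cc_def ZZ_def add.commute)
  finally show ?thesis .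
qed

lemma hf_alt: "hf n x Y = (\<Sum>i<n. \<Sum>j<n. (x i * (if i = j then 0 else 1)) * Y $$ (i,j))"
proof -
  have "hf n x Y = (\<Sum>i<n. x i * (\<Sum>j<n. (if i = j then 0 else 1) * Y $$ (i,j)))"
    unfolding hf_def
  proof (rule sum.cong[OF refl])
    fix i assume "i \<in> {..<n}"
    then have i: "i < n" by simp
    have "(\<Sum>j<n. (if i = j then 0 else 1) * Y $$ (i,j)) = (\<Sum>j<n. Y $$ (i,j) - (if j = i then Y $$ (i,i) else 0))"
      by (rule sum.cong) auto
    also have "\<dots> = (\<Sum>j<n. Y $$ (i,j)) - Y $$ (i,i)" using i by (simp add: sum_subtractf)
    finally show "x i * ((\<Sum>j<n. Y $$ (i,j)) - Y $$ (i,i)) = x i * (\<Sum>j<n. (if i = j then 0 else 1) * Y $$ (i,j))" by simp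
  qed
  also have "\<dots> = (\<Sum>i<n. \<Sum>j<n. (x i * (if i = j then 0 else 1)) * Y $$ (i,j))"
    by (simp add: sum_distrib_left mult.assoc)
  finally show ?thesis .
qed

lemma hf_lin:
  fixes N :: nat
  assumes N: "\<And>a b. a < n \<Longrightarrow> b < n \<Longrightarrow> Nm $$ (a,b) = (\<Sum>m<N. al m * Y1 m $$ (a,b) + be m * Y2 m $$ (a,b))"
  shows "hf n x Nm = (\<Sum>m<N. al m * hf n x (Y1 m) + be m * hf n x (Y2 m))"
proof -
  define w where "w i j = x i * (if i = j then 0 else 1)" for i j
  have "hf n x Nm = (\<Sum>i<n. \<Sum>j<n. w i j * (\<Sum>m<N. al m * Y1 m $$ (i,j) + be m * Y2 m $$ (i,j)))"
    unfolding hf_alt w_def[symmetric] by (intro sum.cong refl) (simp add: N)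
  also have "\<dots> = (\<Sum>i<n. \<Sum>j<n. \<Sum>m<N. al m * (w i j * Y1 m $$ (i,j)) + be m * (w i j * Y2 m $$ (i,j)))"
    by (simp add: sum_distrib_left algebra_simps)
  also have "\<dots> = (\<Sum>i<n. \<Sum>m<N. \<Sum>j<n. al m * (w i j * Y1 m $$ (i,j)) + be m * (w i j * Y2 m $$ (i,j)))"
    by (rule sum.cong[OF refl]) (rule sum.swap)
  also have "\<dots> = (\<Sum>m<N. \<Sum>i<n. \<Sum>j<n. al m * (w i j * Y1 m $$ (i,j)) + be m * (w i j * Y2 m $$ (i,j)))"
    by (rule sum.swap)
  also have "\<dots> = (\<Sum>m<N. al m * hf n x (Y1 m) + be m * hf n x (Y2 m))"
    unfolding hf_alt w_def[symmetric] by (simp add: sum.distrib sum_distrib_left)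
  finally show ?thesis .
qed

lemma tr_diag_J:
  assumes P: "P \<in> carrier_mat n n" and Y: "Y \<in> carrier_mat n n"
    and Pd: "\<And>i l. i < n \<Longrightarrow> l < n \<Longrightarrow> P $$ (i,l) = (if i = l then d i else 0)"
    and J: "J = mat n n (\<lambda>(i,j). if i = j then 0 else 1)"
  shows "mtrace (P * (Y * J)) = (\<Sum>i<n. d i * ((\<Sum>j<n. Y $$ (i,j)) - Y $$ (i,i)))"
proof -
  have Jc: "J \<in> carrier_mat n n" by (simp add: J)
  have YJ: "Y * J \<in> carrier_mat n n" by (rule mult_carrier_mat[OF Y Jc])
  have c: "P * (Y * J) \<in> carrier_mat n n" by (rule mult_carrier_mat[OF P YJ])
  have "mtrace (P * (Y * J)) = (\<Sum>i<n. (P * (Y * J)) $$ (i,i))" by (rule mtrace_alt[OF c])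
  also have "\<dots> = (\<Sum>i<n. d i * ((\<Sum>j<n. Y $$ (i,j)) - Y $$ (i,i)))"
  proof (rule sum.cong[OF refl])
    fix i assume "i \<in> {..<n}"
    then have i: "i < n" by simp
    have "(P * (Y * J)) $$ (i,i) = (\<Sum>l<n. P $$ (i,l) * (Y * J) $$ (l,i))"
      by (rule mult_entry[OF P YJ i i])
    also have "\<dots> = (\<Sum>l<n. if l = i then d i * (Y * J) $$ (i,i) else 0)"
      by (rule sum.cong[OF refl]) (use i in \<open>auto simp: Pd\<close>)
    also have "\<dots> = d i * (Y * J) $$ (i,i)" using i by simp
    also have "(Y * J) $$ (i,i) = (\<Sum>l<n. Y $$ (i,l) * J $$ (l,i))" by (rule mult_entry[OF Y Jc i i])
    also have "\<dots> = (\<Sum>l<n. Y $$ (i,l) - (if l = i then Y $$ (i,i) else 0))"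
      by (rule sum.cong[OF refl]) (use i in \<open>auto simp: J\<close>)
    also have "\<dots> = (\<Sum>j<n. Y $$ (i,j)) - Y $$ (i,i)" using i by (simp add: sum_subtractf)
    finally show "(P * (Y * J)) $$ (i,i) = d i * ((\<Sum>j<n. Y $$ (i,j)) - Y $$ (i,i))" .
  qed
  finally show ?thesis .
qed

lemma final_identity:
  fixes A B Mm S X J D :: "real mat"
  assumes A: "A \<in> carrier_mat n n" and B: "B \<in> carrier_mat n n" and Mm: "Mm \<in> carrier_mat n n"
    and S: "S \<in> carrier_mat n n" and X: "X \<in> carrier_mat n n" and J: "J \<in> carrier_mat n n"
    and hD: "D = Mm * X - X * Mm + B"
    and hJM: "J * Mm = Mm * J" and hJ: "J = S * X - X * S" and hBAS: "(B * A) * S = S * (B * A)"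
  shows "mtrace (D * (A * J)) + mtrace (X * ((Mm * A - A * Mm) * J)) = 0"
proof -
  have AJ: "A * J \<in> carrier_mat n n" by (rule mult_carrier_mat[OF A J])
  have MX: "Mm * X \<in> carrier_mat n n" by (rule mult_carrier_mat[OF Mm X])
  have XM: "X * Mm \<in> carrier_mat n n" by (rule mult_carrier_mat[OF X Mm])
  have MA: "Mm * A \<in> carrier_mat n n" by (rule mult_carrier_mat[OF Mm A])
  have AM: "A * Mm \<in> carrier_mat n n" by (rule mult_carrier_mat[OF A Mm])
  have BA: "B * A \<in> carrier_mat n n" by (rule mult_carrier_mat[OF B A])
  have SX: "S * X \<in> carrier_mat n n" by (rule mult_carrier_mat[OF S X])
  have XS: "X * S \<in> carrier_mat n n" by (rule mult_carrier_mat[OF X S])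
  have MXmXM: "Mm * X - X * Mm \<in> carrier_mat n n" by (rule minus_carrier_mat[OF XM])
  have MXAJ: "Mm * X * (A * J) \<in> carrier_mat n n" by (rule mult_carrier_mat[OF MX AJ])
  have XMAJ: "X * Mm * (A * J) \<in> carrier_mat n n" by (rule mult_carrier_mat[OF XM AJ])
  have BAJ: "B * (A * J) \<in> carrier_mat n n" by (rule mult_carrier_mat[OF B AJ])
  have MAJ: "Mm * A * J \<in> carrier_mat n n" by (rule mult_carrier_mat[OF MA J])
  have AMJ: "A * Mm * J \<in> carrier_mat n n" by (rule mult_carrier_mat[OF AM J])
  have XMAJ2: "X * (Mm * A * J) \<in> carrier_mat n n" by (rule mult_carrier_mat[OF X MAJ])
  have XAMJ: "X * (A * Mm * J) \<in> carrier_mat n n" by (rule mult_carrier_mat[OF X AMJ])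
  have XAJ: "X * (A * J) \<in> carrier_mat n n" by (rule mult_carrier_mat[OF X AJ])
  have t1: "mtrace (D * (A * J)) = mtrace (Mm * X * (A * J)) - mtrace (X * Mm * (A * J)) + mtrace (B * (A * J))"
  proof -
    have "D * (A * J) = (Mm * X - X * Mm) * (A * J) + B * (A * J)"
      unfolding hD by (rule add_mult_distrib_mat[OF MXmXM B AJ])
    also have "(Mm * X - X * Mm) * (A * J) = Mm * X * (A * J) - X * Mm * (A * J)"
      by (rule minus_mult_distrib_mat[OF MX XM AJ])
    finally have e: "D * (A * J) = Mm * X * (A * J) - X * Mm * (A * J) + B * (A * J)" .
    show ?thesis unfolding e
      by (simp only: mtrace_add[OF minus_carrier_mat[OF XMAJ] BAJ] mtrace_minus[OF MXAJ XMAJ])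
  qed
  have t2: "mtrace (X * ((Mm * A - A * Mm) * J)) = mtrace (X * (Mm * A * J)) - mtrace (X * (A * Mm * J))"
  proof -
    have "(Mm * A - A * Mm) * J = Mm * A * J - A * Mm * J"
      by (rule minus_mult_distrib_mat[OF MA AM J])
    moreover have "X * (Mm * A * J - A * Mm * J) = X * (Mm * A * J) - X * (A * Mm * J)"
      by (rule mult_minus_distrib_mat[OF X MAJ AMJ])
    ultimately show ?thesis by (simp only: mtrace_minus[OF XMAJ2 XAMJ])
  qed
  have a1: "mtrace (Mm * X * (A * J)) = mtrace (X * (A * Mm * J))"
  proof -
    have "mtrace (Mm * X * (A * J)) = mtrace (Mm * (X * (A * J)))"
      by (simp only: assoc_mult_mat[OF Mm X AJ])
    also have "\<dots> = mtrace (X * (A * J) * Mm)" by (rule mtrace_comm[OF Mm XAJ])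
    also have "X * (A * J) * Mm = X * (A * J * Mm)" by (rule assoc_mult_mat[OF X AJ Mm])
    also have "A * J * Mm = A * (J * Mm)" by (rule assoc_mult_mat[OF A J Mm])
    also have "J * Mm = Mm * J" by (rule hJM)
    also have "A * (Mm * J) = A * Mm * J" by (rule assoc_mult_mat[OF A Mm J, symmetric])
    finally show ?thesis .
  qed
  have a2: "mtrace (X * Mm * (A * J)) = mtrace (X * (Mm * A * J))"
  proof -
    have "X * Mm * (A * J) = X * (Mm * (A * J))" by (rule assoc_mult_mat[OF X Mm AJ])
    also have "Mm * (A * J) = Mm * A * J" by (rule assoc_mult_mat[OF Mm A J, symmetric])
    finally show ?thesis by simp
  qed
  have a3: "mtrace (B * (A * J)) = 0"
  proof -
    have BAX: "B * A * X \<in> carrier_mat n n" by (rule mult_carrier_mat[OF BA X])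
    have e0: "B * (A * J) = B * A * J" by (rule assoc_mult_mat[OF B A J, symmetric])
    have e1: "B * A * J = B * A * (S * X) - B * A * (X * S)"
      unfolding hJ by (rule mult_minus_distrib_mat[OF BA SX XS])
    have e2: "mtrace (B * A * (S * X)) = mtrace (B * A * (X * S))"
    proof -
      have "B * A * (S * X) = B * A * S * X" by (rule assoc_mult_mat[OF BA S X, symmetric])
      also have "B * A * S = S * (B * A)" by (rule hBAS)
      also have "S * (B * A) * X = S * (B * A * X)" by (rule assoc_mult_mat[OF S BA X])
      finally have "mtrace (B * A * (S * X)) = mtrace (S * (B * A * X))" by simp
      also have "\<dots> = mtrace (B * A * X * S)" by (rule mtrace_comm[OF S BAX])
      also have "B * A * X * S = B * A * (X * S)" by (rule assoc_mult_mat[OF BA X S])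
      finally show ?thesis .
    qed
    have "mtrace (B * (A * J)) = mtrace (B * A * (S * X)) - mtrace (B * A * (X * S))"
      unfolding e0 e1 by (rule mtrace_minus[OF mult_carrier_mat[OF BA SX] mult_carrier_mat[OF BA XS]])
    then show ?thesis using e2 by simp
  qed
  show ?thesis unfolding t1 t2 a1 a2 a3 by simp
qed

lemma mult_Xmat_right:
  assumes P: "P \<in> carrier_mat n n" and ab: "a < n" "b < n"
  shows "(P * Xmat n x) $$ (a,b) = P $$ (a,b) * x b"
proof -
  have "(P * Xmat n x) $$ (a,b) = (\<Sum>l<n. P $$ (a,l) * Xmat n x $$ (l,b))" by (rule mult_entry[OF P Xmat_carrier ab])
  also have "\<dots> = (\<Sum>l<n. if l = b then P $$ (a,b) * x b else 0)"
    by (rule sum.cong[OF refl]) (use ab in \<open>auto simp: Xmat_entry\<close>)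
  also have "\<dots> = P $$ (a,b) * x b" using ab by simp
  finally show ?thesis .
qed

lemma mult_Xmat_left:
  assumes P: "P \<in> carrier_mat n n" and ab: "a < n" "b < n"
  shows "(Xmat n x * P) $$ (a,b) = x a * P $$ (a,b)"
proof -
  have "(Xmat n x * P) $$ (a,b) = (\<Sum>l<n. Xmat n x $$ (a,l) * P $$ (l,b))" by (rule mult_entry[OF Xmat_carrier P ab])
  also have "\<dots> = (\<Sum>l<n. if l = a then x a * P $$ (a,b) else 0)"
    by (rule sum.cong[OF refl]) (use ab in \<open>auto simp: Xmat_entry\<close>)
  also have "\<dots> = x a * P $$ (a,b)" using ab by simp
  finally show ?thesis .
qed

lemma core:
  fixes c :: real and B :: "real mat"
  assumes inj: "inj_on x {..<n}"
    and B: "B \<in> carrier_mat n n" and BS: "B * shiftL n lam x p = shiftL n lam x p * B"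
    and dp: "\<And>m. m < n \<Longrightarrow> pdp F x p m = c * B $$ (m,m)"
    and dx: "\<And>m. m < n \<Longrightarrow> pdx F x p m = c * mtrace (B * DxL n x m)"
  shows "pbracket n F (\<lambda>x p. calE n lam x p - calG n lam x p) x p = 0"
proof -
  define S where "S = shiftL n lam x p"
  define A where "A = adj_mat S"
  define l0 where "l0 = ell x"
  define r where "r a = (\<Sum>l<n. B $$ (a,l) * l0 a l)" for a
  define Mm where "Mm = mat n n (\<lambda>(a,b). B $$ (a,b) * l0 a b - (if a = b then r a else 0))"
  define tr where "tr m = mtrace (B * DxL n x m)" for m
  define Adx where "Adx m = adjD n S (- DxL n x m)" for m
  define Adp where "Adp m = adjD n S (- DpL n m)" for m
  define rs where "rs m = (\<Sum>j<n. A $$ (m,j)) - A $$ (m,m)" for m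
  have Sc: "S \<in> carrier_mat n n" by (simp add: S_def)
  have Ac: "A \<in> carrier_mat n n" unfolding A_def by (rule adj_mat(1)[OF Sc])
  have Mmc: "Mm \<in> carrier_mat n n" by (simp add: Mm_def)
  have Sentry: "S $$ (a,b) = (if a = b then lam - p a else 0) - l0 a b" if "a < n" "b < n" for a b
    using that by (simp add: S_def shiftL_entry l0_def)
  have Mentry: "Mm $$ (a,b) = B $$ (a,b) * l0 a b - (if a = b then r a else 0)" if "a < n" "b < n" for a b
    using that by (simp add: Mm_def)
  have BS': "B * S = S * B" using BS by (simp add: S_def)
  have comm: "(lam - p i) * B $$ (i,j) - (\<Sum>l<n. l0 i l * B $$ (l,j)) = B $$ (i,j) * (lam - p j) - (\<Sum>l<n. B $$ (i,l) * l0 l j)"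
    if ij: "i < n" "j < n" for i j
  proof -
    have "(S * B) $$ (i,j) = (\<Sum>l<n. S $$ (i,l) * B $$ (l,j))" by (rule mult_entry[OF Sc B ij])
    also have "\<dots> = (\<Sum>l<n. (if l = i then (lam - p i) * B $$ (i,j) else 0) - l0 i l * B $$ (l,j))"
      by (rule sum.cong[OF refl]) (use ij in \<open>auto simp: Sentry algebra_simps\<close>)
    also have "\<dots> = (lam - p i) * B $$ (i,j) - (\<Sum>l<n. l0 i l * B $$ (l,j))"
      using ij by (simp add: sum_subtractf)
    finally have e1: "(S * B) $$ (i,j) = (lam - p i) * B $$ (i,j) - (\<Sum>l<n. l0 i l * B $$ (l,j))" .
    have "(B * S) $$ (i,j) = (\<Sum>l<n. B $$ (i,l) * S $$ (l,j))" by (rule mult_entry[OF B Sc ij])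
    also have "\<dots> = (\<Sum>l<n. (if l = j then B $$ (i,j) * (lam - p j) else 0) - B $$ (i,l) * l0 l j)"
      by (rule sum.cong[OF refl]) (use ij in \<open>auto simp: Sentry algebra_simps\<close>)
    also have "\<dots> = B $$ (i,j) * (lam - p j) - (\<Sum>l<n. B $$ (i,l) * l0 l j)"
      using ij by (simp add: sum_subtractf)
    finally have e2: "(B * S) $$ (i,j) = B $$ (i,j) * (lam - p j) - (\<Sum>l<n. B $$ (i,l) * l0 l j)" .
    show ?thesis using e1 e2 BS' by simp
  qed
  have lax: "(Mm * S - S * Mm) $$ (a,b) = (if a = b then (\<Sum>l<n. (l0 a l)^2 * (B $$ (a,l) - B $$ (l,a))) else (B $$ (a,a) - B $$ (b,b)) * (l0 a b)^2)"
    if ab: "a < n" "b < n" for a b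
  proof -
    have "(Mm * S - S * Mm) $$ (a,b) = (Mm * S) $$ (a,b) - (S * Mm) $$ (a,b)"
      by (rule index_minus_carrier[OF mult_carrier_mat[OF Mmc Sc] mult_carrier_mat[OF Sc Mmc] ab])
    also have "\<dots> = (\<Sum>l<n. Mm $$ (a,l) * S $$ (l,b)) - (\<Sum>l<n. S $$ (a,l) * Mm $$ (l,b))"
      by (simp only: mult_entry[OF Mmc Sc ab] mult_entry[OF Sc Mmc ab])
    also have "\<dots> = (if a = b then (\<Sum>l<n. (l0 a l)^2 * (B $$ (a,l) - B $$ (l,a))) else (B $$ (a,a) - B $$ (b,b)) * (l0 a b)^2)"
    proof (rule lax_entry[where ?l0.0 = l0 and q = "\<lambda>a. lam - p a" and B = B and Mm = "\<lambda>a b. Mm $$ (a,b)" and Sm = "\<lambda>a b. S $$ (a,b)"])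
      show "\<And>a. l0 a a = 0" by (simp add: l0_def)
      show "\<And>a b. l0 a b = - l0 b a" unfolding l0_def by (rule ell_anti)
      show "\<And>i j l. i < n \<Longrightarrow> j < n \<Longrightarrow> l < n \<Longrightarrow> i \<noteq> j \<Longrightarrow> l \<noteq> i \<Longrightarrow> l \<noteq> j \<Longrightarrow>
          l0 i l * l0 l j = l0 i j * (l0 i l + l0 l j)" unfolding l0_def by (rule ell_three[OF inj])
      show "\<And>i j. i < n \<Longrightarrow> j < n \<Longrightarrow> (lam - p i) * B $$ (i,j) - (\<Sum>l<n. l0 i l * B $$ (l,j)) =
          B $$ (i,j) * (lam - p j) - (\<Sum>l<n. B $$ (i,l) * l0 l j)" by (rule comm)
      show "a < n" "b < n" by (rule ab(1), rule ab(2))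
      show "\<And>a b. a < n \<Longrightarrow> b < n \<Longrightarrow> Mm $$ (a,b) = B $$ (a,b) * l0 a b - (if a = b then (\<Sum>l<n. B $$ (a,l) * l0 a l) else 0)"
        by (simp add: Mentry r_def)
      show "\<And>a b. a < n \<Longrightarrow> b < n \<Longrightarrow> S $$ (a,b) = (if a = b then lam - p a else 0) - l0 a b"
        by (rule Sentry)
    qed
    finally show ?thesis .
  qed
  have trD: "tr a = (\<Sum>l<n. (l0 a l)^2 * (B $$ (a,l) - B $$ (l,a)))" if a: "a < n" for a
    unfolding tr_def l0_def by (rule mtrace_DxL[OF B a])
  have Zlin: "(Mm * S - S * Mm) $$ (a,b) = (\<Sum>m<n. B $$ (m,m) * (- DxL n x m) $$ (a,b) + (- tr m) * (- DpL n m) $$ (a,b))"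
    if ab: "a < n" "b < n" for a b
  proof -
    have s1: "(\<Sum>m<n. B $$ (m,m) * (- DxL n x m) $$ (a,b)) = (B $$ (a,a) - B $$ (b,b)) * (l0 a b)^2"
    proof -
      have "(\<Sum>m<n. B $$ (m,m) * (- DxL n x m) $$ (a,b)) =
          (\<Sum>m<n. (if m = a then B $$ (a,a) * (l0 a b)^2 else 0) - (if m = b then B $$ (b,b) * (l0 a b)^2 else 0))"
      proof (rule sum.cong[OF refl])
        fix m assume "m \<in> {..<n}"
        have e: "(- DxL n x m) $$ (a,b) = - (DxL n x m $$ (a,b))" using ab by (simp add: DxL_def)
        have e2: "(ell x a m)^2 = (ell x m a)^2" using ell_anti[of x a m] by simp
        show "B $$ (m,m) * (- DxL n x m) $$ (a,b) =
          (if m = a then B $$ (a,a) * (l0 a b)^2 else 0) - (if m = b then B $$ (b,b) * (l0 a b)^2 else 0)"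
          unfolding e DxL_entry[OF ab] l0_def by (cases "m = a"; cases "m = b") (auto simp: algebra_simps)
      qed
      also have "\<dots> = (B $$ (a,a) - B $$ (b,b)) * (l0 a b)^2"
        using ab by (simp add: sum_subtractf algebra_simps)
      finally show ?thesis .
    qed
    have s2: "(\<Sum>m<n. (- tr m) * (- DpL n m) $$ (a,b)) = (if a = b then tr a else 0)"
    proof -
      have "(\<Sum>m<n. (- tr m) * (- DpL n m) $$ (a,b)) = (\<Sum>m<n. if m = a then (if a = b then tr a else 0) else 0)"
        by (rule sum.cong[OF refl]) (use ab in \<open>auto simp: DpL_def\<close>)
      also have "\<dots> = (if a = b then tr a else 0)" using ab by simp
      finally show ?thesis .
    qed
    have "(\<Sum>m<n. B $$ (m,m) * (- DxL n x m) $$ (a,b) + (- tr m) * (- DpL n m) $$ (a,b)) =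
        (B $$ (a,a) - B $$ (b,b)) * (l0 a b)^2 + (if a = b then tr a else 0)"
      by (simp only: sum.distrib s1 s2)
    also have "\<dots> = (Mm * S - S * Mm) $$ (a,b)"
      unfolding lax[OF ab] using trD[OF ab(1)] by (auto simp: l0_def)
    finally show ?thesis by simp
  qed
  have Zc: "Mm * S - S * Mm \<in> carrier_mat n n" by (rule minus_carrier_mat[OF mult_carrier_mat[OF Sc Mmc]])
  have Aeq: "adjD n S (Mm * S - S * Mm) = Mm * A - A * Mm" unfolding A_def by (rule adjD_comm[OF Sc Mmc])
  have Aent: "(Mm * A - A * Mm) $$ (i,j) = (\<Sum>m<n. B $$ (m,m) * Adx m $$ (i,j) + (- tr m) * Adp m $$ (i,j))"
    if ij: "i < n" "j < n" for i j
  proof -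
    have "adjD n S (Mm * S - S * Mm) $$ (i,j) = (\<Sum>m<n. B $$ (m,m) * adjD n S (- DxL n x m) $$ (i,j) + (- tr m) * adjD n S (- DpL n m) $$ (i,j))"
      by (rule adjD_linear2[OF Zlin Zc _ _ ij]) simp_all
    then show ?thesis unfolding Aeq Adx_def Adp_def .
  qed
  have hfN: "hf n x (Mm * A - A * Mm) = (\<Sum>m<n. B $$ (m,m) * hf n x (Adx m) + (- tr m) * hf n x (Adp m))"
    by (rule hf_lin) (rule Aent)
  have br: "pbracket n F (\<lambda>x p. calE n lam x p - calG n lam x p) x p =
      c * ((\<Sum>m<n. B $$ (m,m) * rs m) + hf n x (Mm * A - A * Mm))"
  proof -
    have "pbracket n F (\<lambda>x p. calE n lam x p - calG n lam x p) x p =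
        (\<Sum>m<n. c * (B $$ (m,m) * rs m) + c * (B $$ (m,m) * hf n x (Adx m) + (- tr m) * hf n x (Adp m)))"
      unfolding pbracket_def
    proof (rule sum.cong[OF refl])
      fix m assume "m \<in> {..<n}"
      then have m: "m < n" by simp
      show "pdp F x p m * pdx (\<lambda>x p. calE n lam x p - calG n lam x p) x p m -
            pdx F x p m * pdp (\<lambda>x p. calE n lam x p - calG n lam x p) x p m =
          c * (B $$ (m,m) * rs m) + c * (B $$ (m,m) * hf n x (Adx m) + (- tr m) * hf n x (Adp m))"
        unfolding dp[OF m] dx[OF m] pdx_H[OF inj m] pdp_H[OF m] S_def[symmetric] A_def[symmetric]
          rs_def[symmetric] Adx_def[symmetric] Adp_def[symmetric] tr_def[symmetric]
        by (simp add: algebra_simps)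
    qed
    also have "\<dots> = c * ((\<Sum>m<n. B $$ (m,m) * rs m) + hf n x (Mm * A - A * Mm))"
      unfolding hfN by (simp add: sum.distrib sum_distrib_left distrib_left)
    finally show ?thesis .
  qed
  define D where "D = mat n n (\<lambda>(a,b). if a = b then B $$ (a,a) else (0::real))"
  define J where "J = mat n n (\<lambda>(a,b). if a = b then 0 else (1::real))"
  define X where "X = Xmat n x"
  have Dc: "D \<in> carrier_mat n n" by (simp add: D_def)
  have Jc: "J \<in> carrier_mat n n" by (simp add: J_def)
  have Xc: "X \<in> carrier_mat n n" by (simp add: X_def)
  have MA: "Mm * A - A * Mm \<in> carrier_mat n n" by (rule minus_carrier_mat[OF mult_carrier_mat[OF Ac Mmc]])
  have tD: "mtrace (D * (A * J)) = (\<Sum>m<n. B $$ (m,m) * rs m)"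
    unfolding rs_def by (rule tr_diag_J[OF Dc Ac _ J_def]) (simp add: D_def)
  have tX: "mtrace (X * ((Mm * A - A * Mm) * J)) = hf n x (Mm * A - A * Mm)"
    unfolding hf_def by (rule tr_diag_J[OF Xc MA _ J_def]) (simp add: X_def Xmat_entry)
  have rowsum: "(\<Sum>l<n. Mm $$ (a,l)) = 0" if a: "a < n" for a
  proof -
    have "(\<Sum>l<n. Mm $$ (a,l)) = (\<Sum>l<n. B $$ (a,l) * l0 a l - (if l = a then r a else 0))"
      by (rule sum.cong[OF refl]) (use a in \<open>auto simp: Mentry\<close>)
    then show ?thesis using a by (simp add: sum_subtractf r_def)
  qed
  have colsum: "(\<Sum>l<n. Mm $$ (l,b)) = 0" if b: "b < n" for b
  proof -
    have "(\<Sum>l<n. Mm $$ (l,b)) = (\<Sum>l<n. B $$ (l,b) * l0 l b - (if l = b then r b else 0))"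
      by (rule sum.cong[OF refl]) (use b in \<open>auto simp: Mentry\<close>)
    also have "\<dots> = (\<Sum>l<n. B $$ (l,b) * l0 l b) - r b" using b by (simp add: sum_subtractf)
    also have "(\<Sum>l<n. B $$ (l,b) * l0 l b) = - (\<Sum>l<n. l0 b l * B $$ (l,b))"
    proof -
      have "(\<Sum>l<n. B $$ (l,b) * l0 l b) = (\<Sum>l<n. - (l0 b l * B $$ (l,b)))"
      proof (rule sum.cong[OF refl])
        fix l
        have e: "l0 l b = - l0 b l" unfolding l0_def by (rule ell_anti)
        show "B $$ (l,b) * l0 l b = - (l0 b l * B $$ (l,b))" by (simp add: e)
      qed
      then show ?thesis by (simp add: sum_negf)
    qed
    also have "(\<Sum>l<n. l0 b l * B $$ (l,b)) = (\<Sum>l<n. B $$ (b,l) * l0 l b)"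
      using comm[OF b b] by simp
    also have "(\<Sum>l<n. B $$ (b,l) * l0 l b) = - r b"
    proof -
      have "(\<Sum>l<n. B $$ (b,l) * l0 l b) = (\<Sum>l<n. - (B $$ (b,l) * l0 b l))"
      proof (rule sum.cong[OF refl])
        fix l
        have e: "l0 l b = - l0 b l" unfolding l0_def by (rule ell_anti)
        show "B $$ (b,l) * l0 l b = - (B $$ (b,l) * l0 b l)" by (simp add: e)
      qed
      then show ?thesis by (simp add: sum_negf r_def)
    qed
    finally show ?thesis by simp
  qed
  have hD: "D = Mm * X - X * Mm + B"
  proof (rule eq_matI)
    fix a b assume "a < dim_row (Mm * X - X * Mm + B)" "b < dim_col (Mm * X - X * Mm + B)"
    then have ab: "a < n" "b < n" using B by auto
    have MXc: "Mm * X \<in> carrier_mat n n" "X * Mm \<in> carrier_mat n n"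
      by (rule mult_carrier_mat[OF Mmc Xc], rule mult_carrier_mat[OF Xc Mmc])
    have "(Mm * X - X * Mm + B) $$ (a,b) = Mm $$ (a,b) * x b - x a * Mm $$ (a,b) + B $$ (a,b)"
    proof -
      have e1: "(Mm * X) $$ (a,b) = Mm $$ (a,b) * x b" unfolding X_def by (rule mult_Xmat_right[OF Mmc ab])
      have e2: "(X * Mm) $$ (a,b) = x a * Mm $$ (a,b)" unfolding X_def by (rule mult_Xmat_left[OF Mmc ab])
      show ?thesis
        unfolding index_add_carrier[OF minus_carrier_mat[OF MXc(2)] B ab] index_minus_carrier[OF MXc ab] e1 e2 ..
    qed
    also have "\<dots> = D $$ (a,b)"
    proof (cases "a = b")
      case True then show ?thesis using ab by (simp add: D_def)
    next
      case False
      have h: "l0 a b * (x a - x b) = 1" unfolding l0_def by (rule ell_mult_diff[OF False inj ab])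
      have "Mm $$ (a,b) * x b - x a * Mm $$ (a,b) + B $$ (a,b) = B $$ (a,b) * (1 - l0 a b * (x a - x b))"
        using ab False by (simp add: Mentry algebra_simps)
      then show ?thesis using h ab False by (simp add: D_def)
    qed
    finally show "D $$ (a,b) = (Mm * X - X * Mm + B) $$ (a,b)" by simp
  qed (use Dc B in auto)
  have hJM: "J * Mm = Mm * J"
  proof (rule eq_matI)
    fix a b assume "a < dim_row (Mm * J)" "b < dim_col (Mm * J)"
    then have ab: "a < n" "b < n" using Mmc Jc by auto
    have "(J * Mm) $$ (a,b) = (\<Sum>l<n. J $$ (a,l) * Mm $$ (l,b))" by (rule mult_entry[OF Jc Mmc ab])
    also have "\<dots> = (\<Sum>l<n. Mm $$ (l,b) - (if l = a then Mm $$ (a,b) else 0))"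
      by (rule sum.cong[OF refl]) (use ab in \<open>auto simp: J_def\<close>)
    also have "\<dots> = - Mm $$ (a,b)" using ab colsum[OF ab(2)] by (simp add: sum_subtractf)
    also have "\<dots> = (\<Sum>l<n. Mm $$ (a,l) - (if l = b then Mm $$ (a,b) else 0))"
      using ab rowsum[OF ab(1)] by (simp add: sum_subtractf)
    also have "\<dots> = (\<Sum>l<n. Mm $$ (a,l) * J $$ (l,b))"
      by (rule sum.cong[OF refl]) (use ab in \<open>auto simp: J_def\<close>)
    also have "\<dots> = (Mm * J) $$ (a,b)" by (rule mult_entry[OF Mmc Jc ab, symmetric])
    finally show "(J * Mm) $$ (a,b) = (Mm * J) $$ (a,b)" .
  qed (use Mmc Jc in auto)
  have hJ: "J = S * X - X * S"
  proof (rule eq_matI)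
    fix a b assume "a < dim_row (S * X - X * S)" "b < dim_col (S * X - X * S)"
    then have ab: "a < n" "b < n" using Sc Xc by auto
    have SXc: "S * X \<in> carrier_mat n n" "X * S \<in> carrier_mat n n"
      by (rule mult_carrier_mat[OF Sc Xc], rule mult_carrier_mat[OF Xc Sc])
    have "(S * X - X * S) $$ (a,b) = S $$ (a,b) * x b - x a * S $$ (a,b)"
    proof -
      have e1: "(S * X) $$ (a,b) = S $$ (a,b) * x b" unfolding X_def by (rule mult_Xmat_right[OF Sc ab])
      have e2: "(X * S) $$ (a,b) = x a * S $$ (a,b)" unfolding X_def by (rule mult_Xmat_left[OF Sc ab])
      show ?thesis unfolding index_minus_carrier[OF SXc ab] e1 e2 ..
    qed
    also have "\<dots> = J $$ (a,b)"
    proof (cases "a = b")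
      case True then show ?thesis using ab by (simp add: J_def)
    next
      case False
      have "l0 a b * (x a - x b) = 1" unfolding l0_def by (rule ell_mult_diff[OF False inj ab])
      then show ?thesis using ab False by (simp add: J_def Sentry algebra_simps)
    qed
    finally show "J $$ (a,b) = (S * X - X * S) $$ (a,b)" by simp
  qed (use Jc Sc Xc in auto)
  have hBAS: "(B * A) * S = S * (B * A)"
  proof -
    have SA: "S * A = det S \<cdot>\<^sub>m 1\<^sub>m n" "A * S = det S \<cdot>\<^sub>m 1\<^sub>m n"
      unfolding A_def by (rule adj_mat(2)[OF Sc], rule adj_mat(3)[OF Sc])
    have "(B * A) * S = B * (A * S)" by (rule assoc_mult_mat[OF B Ac Sc])
    also have "\<dots> = B * (S * A)" unfolding SA ..
    also have "\<dots> = (B * S) * A" by (rule assoc_mult_mat[OF B Sc Ac, symmetric])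
    also have "\<dots> = (S * B) * A" unfolding BS' ..
    also have "\<dots> = S * (B * A)" by (rule assoc_mult_mat[OF Sc B Ac])
    finally show ?thesis .
  qed
  have "mtrace (D * (A * J)) + mtrace (X * ((Mm * A - A * Mm) * J)) = 0"
    by (rule final_identity[OF Ac B Mmc Sc Xc Jc hD hJM hJ hBAS])
  then have "(\<Sum>m<n. B $$ (m,m) * rs m) + hf n x (Mm * A - A * Mm) = 0" unfolding tD tX .
  then show ?thesis unfolding br by simp
qed

lemma S_L_comm: "shiftL n lam x p * Lmat n x p = Lmat n x p * shiftL n lam x p"
proof -
  have L: "Lmat n x p \<in> carrier_mat n n" by simp
  have I: "lam \<cdot>\<^sub>m 1\<^sub>m n \<in> carrier_mat n n" by simp
  have "shiftL n lam x p * Lmat n x p = lam \<cdot>\<^sub>m 1\<^sub>m n * Lmat n x p - Lmat n x p * Lmat n x p"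
    unfolding shiftL_def by (rule minus_mult_distrib_mat[OF I L L])
  also have "lam \<cdot>\<^sub>m 1\<^sub>m n * Lmat n x p = lam \<cdot>\<^sub>m (1\<^sub>m n * Lmat n x p)"
    by (rule mult_smult_assoc_mat[OF one_carrier_mat L])
  also have "1\<^sub>m n * Lmat n x p = Lmat n x p" by (rule left_mult_one_mat[OF L])
  also have "lam \<cdot>\<^sub>m Lmat n x p = lam \<cdot>\<^sub>m (Lmat n x p * 1\<^sub>m n)" by (simp only: right_mult_one_mat[OF L])
  also have "lam \<cdot>\<^sub>m (Lmat n x p * 1\<^sub>m n) = Lmat n x p * (lam \<cdot>\<^sub>m 1\<^sub>m n)"
    by (rule mult_smult_distrib[OF L one_carrier_mat, symmetric])
  also have "Lmat n x p * (lam \<cdot>\<^sub>m 1\<^sub>m n) - Lmat n x p * Lmat n x p = Lmat n x p * shiftL n lam x p"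
    unfolding shiftL_def by (rule mult_minus_distrib_mat[OF L I L, symmetric])
  finally show ?thesis .
qed

theorem mainTheorem8:
  fixes n k :: nat and lam :: real and x p :: "nat \<Rightarrow> real"
  assumes "n \<ge> 1" and "k \<ge> 1" and "inj_on x {..<n}"
  shows "pbracket n (\<lambda>x p. mtrace ((shiftL n lam x p) ^\<^sub>m k))
                     (\<lambda>x p. calE n lam x p - calG n lam x p) x p = 0 \<and>
         pbracket n (Ik n k) (\<lambda>x p. calE n lam x p - calG n lam x p) x p = 0"
proof
  have inj: "inj_on x {..<n}" by (rule assms(3))
  show "pbracket n (\<lambda>x p. mtrace ((shiftL n lam x p) ^\<^sub>m k))
                     (\<lambda>x p. calE n lam x p - calG n lam x p) x p = 0"
  proof (rule core[OF inj, where B = "shiftL n lam x p ^\<^sub>m (k - 1)" and c = "- real k"])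
    show "shiftL n lam x p ^\<^sub>m (k - 1) \<in> carrier_mat n n" by (rule pow_carrier_mat[OF shiftL_carrier])
    show "shiftL n lam x p ^\<^sub>m (k - 1) * shiftL n lam x p = shiftL n lam x p * shiftL n lam x p ^\<^sub>m (k - 1)"
      using pow_commute[OF shiftL_carrier shiftL_carrier refl, of n lam x p "k - 1"] by simp
    show "\<And>m. m < n \<Longrightarrow> pdp (\<lambda>x p. mtrace (shiftL n lam x p ^\<^sub>m k)) x p m = - real k * (shiftL n lam x p ^\<^sub>m (k - 1)) $$ (m,m)"
      by (rule pd_F1(2)[OF inj])
    show "\<And>m. m < n \<Longrightarrow> pdx (\<lambda>x p. mtrace (shiftL n lam x p ^\<^sub>m k)) x p m = - real k * mtrace (shiftL n lam x p ^\<^sub>m (k - 1) * DxL n x m)"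
      by (rule pd_F1(1)[OF inj])
  qed
  show "pbracket n (Ik n k) (\<lambda>x p. calE n lam x p - calG n lam x p) x p = 0"
  proof (rule core[OF inj, where B = "Lmat n x p ^\<^sub>m (k - 1)" and c = 1])
    show "Lmat n x p ^\<^sub>m (k - 1) \<in> carrier_mat n n" by (rule pow_carrier_mat[OF Lmat_carrier])
    show "Lmat n x p ^\<^sub>m (k - 1) * shiftL n lam x p = shiftL n lam x p * Lmat n x p ^\<^sub>m (k - 1)"
      using pow_commute[OF Lmat_carrier[of n x p] shiftL_carrier[of n lam x p] S_L_comm[of n lam x p], where k = "k - 1"] by simp
    show "\<And>m. m < n \<Longrightarrow> pdp (Ik n k) x p m = 1 * (Lmat n x p ^\<^sub>m (k - 1)) $$ (m,m)"
      using pd_F2(2)[OF inj _ assms(2)] by simp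
    show "\<And>m. m < n \<Longrightarrow> pdx (Ik n k) x p m = 1 * mtrace (Lmat n x p ^\<^sub>m (k - 1) * DxL n x m)"
      using pd_F2(1)[OF inj _ assms(2)] by simp
  qed
qed


end
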